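(* (i) For $N=1$ (solid ball of radius $r_1$), for all sufficiently small $\delta>0$ the equation $\det\mathbf{A}_1(\omega,\delta)=0$ has a root $\omega_{1,1}(\delta)$ with positive real part, depending continuously on $\delta$, with $$\omega_{1,1}(\delta)=\frac{\sqrt3\,v_{\mathrm r}}{r_1}\delta^{1/2}-\mathrm{i}\frac{3v_{\mathrm r}}{2\tau r_1}\delta+O(\delta^{3/2}).$$ (ii) For $N=2$ (spherical shell $r_2<|x|\le r_1$ as resonator, $r_1>r_2>0$), for all sufficiently small $\delta>0$ the equation $\det\mathbf{A}_2(\omega,\delta)=0$ has a root $\omega_{2,1}(\delta)$ with positive real part, depending continuously on $\delta$, with $$\omega_{2,1}(\delta)=\frac{\sqrt{3r_1}\,v_{\mathrm r}}{\sqrt{r_1^3-r_2^3}}\delta^{1/2}-\mathrm{i}\frac{3r_1^2v_{\mathrm r}}{2\tau(r_1^3-r_2^3)}\delta+O(\delta^{3/2}).$$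
   Context: Concentric balls: radii $r_1>r_2>\dots>r_N>0$, $D_0=\{|x|>r_1\}$, $D_j=\{r_{j+1}<|x|\le r_j\}$ ($1\le j\le N-1$), $D_N=\{|x|\le r_N\}$. Odd layers are resonators with density/bulk modulus $\rho_{\mathrm r},\kappa_{\mathrm r}$; even layers (including $D_0$) have $\rho,\kappa$. $v_{\mathrm r}=\sqrt{\kappa_{\mathrm r}/\rho_{\mathrm r}}$, $v=\sqrt{\kappa/\rho}$ are fixed positive constants, $k_{\mathrm r}=\omega/v_{\mathrm r}$, $k=\omega/v$, $\delta=\rho_{\mathrm r}/\rho$, $\tau=v/v_{\mathrm r}$. Let $j(t)=j_0(t)=\sin t/t$ and $h(t)=h^{(1)}_0(t)=-\mathrm{i}e^{\mathrm{i}t}/t$ (spherical Bessel/Hankel functions of order 0), with $'$ denoting $d/dt$. The monopolar ($n=0$) transmission matrix $\mathbf{A}_N(\omega,\delta)$ is the $2N\times2N$ block tridiagonal matrix (unknowns $(a_1,b_1,\dots,a_N,b_N)$) with $2\times2$ diagonal blocks $M_i$ ($1\le i\le N$), superdiagonal blocks $R_i$ ($1\le i\le N-1$) and subdiagonal blocks $L_i$ ($2\le i\le N$), where for $i$ odd: $M_i=\begin{pmatrix}-h(kr_i)&j(k_{\mathrm r}r_i)\\-\delta h'(kr_i)&\tau j'(k_{\mathrm r}r_i)\end{pmatrix}$, $R_i=\begin{pmatrix}h(k_{\mathrm r}r_i)&0\\ \tau h'(k_{\mathrm r}r_i)&0\end{pmatrix}$, $L_i=\begin{pmatrix}0&-j(kr_i)\\0&-\delta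 j'(kr_i)\end{pmatrix}$; for $i$ even: $M_i=\begin{pmatrix}-h(k_{\mathrm r}r_i)&j(kr_i)\\-\tau h'(k_{\mathrm r}r_i)&\delta j'(kr_i)\end{pmatrix}$, $R_i=\begin{pmatrix}h(kr_i)&0\\ \delta h'(kr_i)&0\end{pmatrix}$, $L_i=\begin{pmatrix}0&-j(k_{\mathrm r}r_i)\\0&-\tau j'(k_{\mathrm r}r_i)\end{pmatrix}$. Roots $\omega$ of $\det\mathbf{A}_N(\omega,\delta)=0$ with $\omega\to0$ as $\delta\to0$ are the monopolar subwavelength resonant frequencies. *)

theory Defs
  imports Complex_Main "HOL-Analysis.Derivative" "HOL-Library.Landau_Symbols" "Jordan_Normal_Form.Determinant"
begin

definition sph_j :: "complex \<Rightarrow> complex" where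
  "sph_j t = sin t / t"

definition sph_h :: "complex \<Rightarrow> complex" where
  "sph_h t = - \<i> * exp (\<i> * t) / t"

text \<open>Entries (a,b) in {0,1}x{0,1} of the 2x2 blocks of layer interface i.
  ko, co: wavenumber and coefficient outside the interface r_i;
  ki, ci: wavenumber and coefficient inside.\<close>
definition blockM :: "complex \<Rightarrow> complex \<Rightarrow> complex \<Rightarrow> complex \<Rightarrow> real \<Rightarrow> nat \<Rightarrow> nat \<Rightarrow> complex" where
  "blockM ko co ki ci r a b =
     (if a = 0 then (if b = 0 then - sph_h (ko * r) else sph_j (ki * r))
      else (if b = 0 then - co * deriv sph_h (ko * r) else ci * deriv sph_j (ki * r)))"

definition blockR :: "complex \<Rightarrow> complex \<Rightarrow> complex \<Rightarrow> complex \<Rightarrow> real \<Rightarrow> nat \<Rightarrow> nat \<Rightarrow> complex" where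
  "blockR ko co ki ci r a b =
     (if b = 0 then (if a = 0 then sph_h (ki * r) else ci * deriv sph_h (ki * r)) else 0)"

definition blockL :: "complex \<Rightarrow> complex \<Rightarrow> complex \<Rightarrow> complex \<Rightarrow> real \<Rightarrow> nat \<Rightarrow> nat \<Rightarrow> complex" where
  "blockL ko co ki ci r a b =
     (if b = 1 then (if a = 0 then - sph_j (ko * r) else - co * deriv sph_j (ko * r)) else 0)"

text \<open>Monopolar transmission matrix A_N(omega, delta), size 2N x 2N, with
  radii r 1 > ... > r N, speeds v (background) and vr (resonator).\<close>
definition transmission_matrix ::
  "nat \<Rightarrow> (nat \<Rightarrow> real) \<Rightarrow> real \<Rightarrow> real \<Rightarrow> complex \<Rightarrow> real \<Rightarrow> complex mat" where
  "transmission_matrix N r v vr \<omega> \<delta> =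
     (let k = \<omega> / of_real v; kr = \<omega> / of_real vr;
          \<tau> = complex_of_real (v / vr); d = complex_of_real \<delta> in
      mat (2*N) (2*N) (\<lambda>(p, q).
        let i = p div 2 + 1; l = q div 2 + 1; a = p mod 2; b = q mod 2;
            ko = (if odd i then k else kr); co = (if odd i then d else \<tau>);
            ki = (if odd i then kr else k); ci = (if odd i then \<tau> else d) in
        if l = i then blockM ko co ki ci (r i) a b
        else if l = i + 1 then blockR ko co ki ci (r i) a b
        else if i = l + 1 then blockL ko co ki ci (r i) a b
        else 0))"

end

theory Submission imports Defs "HOL-Complex_Analysis.Complex_Analysis"
begin

hide_const (open) Determinants.det


lemma exp_rem:
  fixes z :: complex
  shows "norm (exp z - (\<Sum>k<n. z^k / fact k)) \<le> norm z ^ n * exp (norm z)"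
proof -
  define g where "g = (\<lambda>m. inverse (fact (m + n)) *\<^sub>R (z ^ (m + n)))"
  have e: "exp z = (\<Sum>k<n. z^k / fact k) + suminf g"
    using exp_first_terms[of z n] unfolding g_def by (simp add: scaleR_conv_of_real divide_inverse mult.commute)
  have gn: "norm (g m) = norm z ^ (m+n) / fact (m+n)" for m
    by (simp add: g_def norm_power divide_inverse mult.commute)
  have sn: "summable (\<lambda>m. norm (g m))"
    unfolding gn using summable_ignore_initial_segment[OF summable_exp[of "norm z"], of n]
    by (simp add: divide_inverse mult.commute)
  have s2: "summable (\<lambda>m. norm z ^ n * (norm z ^ m / fact m))"
    using summable_exp[of "norm z"] by (intro summable_mult) (simp add: divide_inverse mult.commute)
  have "norm (suminf g) \<le> (\<Sum>m. norm (g m))" by (rule summable_norm[OF sn])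
  also have "\<dots> \<le> (\<Sum>m. norm z ^ n * (norm z ^ m / fact m))"
  proof (rule suminf_le[OF _ sn s2])
    fix m
    have "fact m \<le> (fact (m+n) :: real)" by (rule fact_mono) simp
    then have "norm z ^ (m+n) / fact (m+n) \<le> norm z ^ (m+n) / fact m"
      by (intro divide_left_mono) auto
    then show "norm (g m) \<le> norm z ^ n * (norm z ^ m / fact m)"
      unfolding gn by (simp add: power_add mult.commute)
  qed
  also have "\<dots> = norm z ^ n * exp (norm z)"
  proof -
    have "(\<lambda>m. norm z ^ m / fact m) sums exp (norm z)"
      using exp_converges[of "norm z"] by (simp add: divide_inverse mult.commute)
    then have "(\<lambda>m. norm z ^ n * (norm z ^ m / fact m)) sums (norm z ^ n * exp (norm z))"
      by (rule sums_mult)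
    then show ?thesis by (rule sums_unique[symmetric])
  qed
  finally show ?thesis using e by simp
qed

definition Erem :: "nat \<Rightarrow> complex \<Rightarrow> complex" where
  "Erem n u = exp u - (\<Sum>k<n. u^k / fact k)"

lemma Erem_bound: "norm u \<le> 1 \<Longrightarrow> norm (Erem n u) \<le> 3 * norm u ^ n"
proof -
  assume u: "norm u \<le> 1"
  have "exp (norm u) \<le> exp 1" using u by simp
  also have "\<dots> \<le> 3" by (rule exp_le)
  finally have "exp (norm u) \<le> 3" .
  then have "norm u ^ n * exp (norm u) \<le> norm u ^ n * 3" by (intro mult_left_mono) auto
  then show ?thesis using exp_rem[of u n] unfolding Erem_def by simp
qed

lemma sin_id1: "sin z - z = (Erem 3 (\<i>*z) - Erem 3 (-(\<i>*z))) / (2*\<i>)"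
  by (simp add: Erem_def sin_exp_eq eval_nat_numeral field_simps)

lemma cos_id1: "cos z - 1 = (Erem 2 (\<i>*z) + Erem 2 (-(\<i>*z))) / 2"
  by (simp add: Erem_def cos_exp_eq eval_nat_numeral field_simps)

lemma sin_id0: "sin z = (Erem 1 (\<i>*z) - Erem 1 (-(\<i>*z))) / (2*\<i>)"
  by (simp add: Erem_def sin_exp_eq eval_nat_numeral field_simps)

lemma p_id: "sin z - z * cos z - z^3/3 = (Erem 5 (\<i>*z) - Erem 5 (-(\<i>*z))) / (2*\<i>) - z * (Erem 4 (\<i>*z) + Erem 4 (-(\<i>*z))) / 2"
  by (simp add: Erem_def sin_exp_eq cos_exp_eq eval_nat_numeral field_simps)


lemma sin_lin: "norm (z::complex) \<le> 1 \<Longrightarrow> norm (sin z - z) \<le> 3 * norm z ^ 3"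
proof -
  assume z: "norm z \<le> 1"
  have a: "norm (Erem 3 (\<i>*z)) \<le> 3 * norm z ^ 3" using Erem_bound[of "\<i>*z" 3] z by (simp add: norm_mult)
  have b: "norm (Erem 3 (-(\<i>*z))) \<le> 3 * norm z ^ 3" using Erem_bound[of "-(\<i>*z)" 3] z by (simp add: norm_mult)
  have "norm (sin z - z) = norm (Erem 3 (\<i>*z) - Erem 3 (-(\<i>*z))) / 2"
    by (simp add: sin_id1 norm_divide norm_mult)
  also have "\<dots> \<le> (norm (Erem 3 (\<i>*z)) + norm (Erem 3 (-(\<i>*z)))) / 2"
    by (intro divide_right_mono norm_triangle_ineq4) simp
  finally show ?thesis using a b by simp
qed

lemma cos_quad: "norm (z::complex) \<le> 1 \<Longrightarrow> norm (cos z - 1) \<le> 3 * norm z ^ 2"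
proof -
  assume z: "norm z \<le> 1"
  have a: "norm (Erem 2 (\<i>*z)) \<le> 3 * norm z ^ 2" using Erem_bound[of "\<i>*z" 2] z by (simp add: norm_mult)
  have b: "norm (Erem 2 (-(\<i>*z))) \<le> 3 * norm z ^ 2" using Erem_bound[of "-(\<i>*z)" 2] z by (simp add: norm_mult)
  have "norm (cos z - 1) = norm (Erem 2 (\<i>*z) + Erem 2 (-(\<i>*z))) / 2"
    by (simp add: cos_id1 norm_divide norm_mult)
  also have "\<dots> \<le> (norm (Erem 2 (\<i>*z)) + norm (Erem 2 (-(\<i>*z)))) / 2"
    by (intro divide_right_mono norm_triangle_ineq) simp
  finally show ?thesis using a b by simp
qed

lemma sin_bd: "norm (z::complex) \<le> 1 \<Longrightarrow> norm (sin z) \<le> 3 * norm z"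
proof -
  assume z: "norm z \<le> 1"
  have a: "norm (Erem 1 (\<i>*z)) \<le> 3 * norm z" using Erem_bound[of "\<i>*z" 1] z by (simp add: norm_mult)
  have b: "norm (Erem 1 (-(\<i>*z))) \<le> 3 * norm z" using Erem_bound[of "-(\<i>*z)" 1] z by (simp add: norm_mult)
  have "norm (sin z) = norm (Erem 1 (\<i>*z) - Erem 1 (-(\<i>*z))) / 2"
    by (simp add: sin_id0 norm_divide norm_mult)
  also have "\<dots> \<le> (norm (Erem 1 (\<i>*z)) + norm (Erem 1 (-(\<i>*z)))) / 2"
    by (intro divide_right_mono norm_triangle_ineq4) simp
  finally show ?thesis using a b by simp
qed

lemma p_quint: "norm (z::complex) \<le> 1 \<Longrightarrow> norm (sin z - z * cos z - z^3/3) \<le> 6 * norm z ^ 5"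
proof -
  assume z: "norm z \<le> 1"
  have a: "norm (Erem 5 (\<i>*z)) \<le> 3 * norm z ^ 5" using Erem_bound[of "\<i>*z" 5] z by (simp add: norm_mult)
  have b: "norm (Erem 5 (-(\<i>*z))) \<le> 3 * norm z ^ 5" using Erem_bound[of "-(\<i>*z)" 5] z by (simp add: norm_mult)
  have c: "norm (Erem 4 (\<i>*z)) \<le> 3 * norm z ^ 4" using Erem_bound[of "\<i>*z" 4] z by (simp add: norm_mult)
  have d: "norm (Erem 4 (-(\<i>*z))) \<le> 3 * norm z ^ 4" using Erem_bound[of "-(\<i>*z)" 4] z by (simp add: norm_mult)
  have "norm (sin z - z * cos z - z^3/3) \<le> norm ((Erem 5 (\<i>*z) - Erem 5 (-(\<i>*z))) / (2*\<i>)) + norm (z * (Erem 4 (\<i>*z) + Erem 4 (-(\<i>*z))) / 2)"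
    unfolding p_id by (rule norm_triangle_ineq4)
  also have "\<dots> \<le> (norm (Erem 5 (\<i>*z)) + norm (Erem 5 (-(\<i>*z)))) / 2 + norm z * (norm (Erem 4 (\<i>*z)) + norm (Erem 4 (-(\<i>*z)))) / 2"
    by (intro add_mono) (auto simp: norm_divide norm_mult intro!: divide_right_mono mult_left_mono norm_triangle_ineq4 norm_triangle_ineq)
  also have "\<dots> \<le> (3 * norm z ^ 5 + 3 * norm z ^ 5) / 2 + norm z * (3 * norm z ^ 4 + 3 * norm z ^ 4) / 2"
    using a b c d by (intro add_mono divide_right_mono mult_left_mono) auto
  also have "\<dots> = 6 * norm z ^ 5" by (simp add: field_simps eval_nat_numeral)
  finally show ?thesis .
qed

definition pf :: "complex \<Rightarrow> complex" where "pf z = (sin z - z * cos z) / z^3"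
definition sincf :: "complex \<Rightarrow> complex" where "sincf z = sin z / z"
definition qf :: "complex \<Rightarrow> complex" where "qf z = cos z + z * sin z"

lemma pf_bd: "z \<noteq> 0 \<Longrightarrow> norm z \<le> 1 \<Longrightarrow> norm (pf z - 1/3) \<le> 6 * norm z ^ 2"
proof -
  assume z: "z \<noteq> 0" "norm z \<le> 1"
  have "pf z - 1/3 = (sin z - z * cos z - z^3/3) / z^3" using z by (simp add: pf_def field_simps)
  then have "norm (pf z - 1/3) = norm (sin z - z * cos z - z^3/3) / norm z ^ 3" by (simp add: norm_divide norm_power)
  also have "\<dots> \<le> 6 * norm z ^ 5 / norm z ^ 3" using p_quint[OF z(2)] by (intro divide_right_mono) auto
  also have "\<dots> = 6 * norm z ^ 2" using z by (simp add: field_simps eval_nat_numeral)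
  finally show ?thesis .
qed

lemma sincf_bd: "z \<noteq> 0 \<Longrightarrow> norm z \<le> 1 \<Longrightarrow> norm (sincf z - 1) \<le> 3 * norm z ^ 2"
proof -
  assume z: "z \<noteq> 0" "norm z \<le> 1"
  have "sincf z - 1 = (sin z - z) / z" using z by (simp add: sincf_def field_simps)
  then have "norm (sincf z - 1) = norm (sin z - z) / norm z" by (simp add: norm_divide)
  also have "\<dots> \<le> 3 * norm z ^ 3 / norm z" using sin_lin[OF z(2)] by (intro divide_right_mono) auto
  also have "\<dots> = 3 * norm z ^ 2" using z by (simp add: field_simps eval_nat_numeral)
  finally show ?thesis .
qed

lemma qf_bd: "norm (z::complex) \<le> 1 \<Longrightarrow> norm (qf z - 1) \<le> 6 * norm z ^ 2"
proof -
  assume z: "norm z \<le> 1"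
  have "norm (qf z - 1) \<le> norm (cos z - 1) + norm z * norm (sin z)"
    unfolding qf_def by (metis add_diff_eq diff_add_eq norm_mult norm_triangle_ineq add.commute)
  also have "\<dots> \<le> 3 * norm z ^ 2 + norm z * (3 * norm z)"
    using cos_quad[OF z] sin_bd[OF z] by (intro add_mono mult_left_mono) auto
  finally show ?thesis by (simp add: power2_eq_square)
qed

lemma cos_bd: "norm (z::complex) \<le> 1 \<Longrightarrow> norm (cos z) \<le> 4"
proof -
  assume z: "norm z \<le> 1"
  have "norm (cos z) \<le> norm (cos z - 1) + 1" by (metis norm_triangle_sub norm_one add.commute)
  also have "\<dots> \<le> 3 * norm z ^ 2 + 1" using cos_quad[OF z] by simp
  also have "\<dots> \<le> 3 * 1 + 1" using z by (intro add_mono mult_left_mono power_le_one) auto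
  finally show ?thesis by simp
qed


definition bnd :: "complex set \<Rightarrow> (real \<Rightarrow> complex \<Rightarrow> complex) \<Rightarrow> nat \<Rightarrow> bool" where
  "bnd S f k \<longleftrightarrow> (\<exists>C e. 0 < e \<and> (\<forall>\<epsilon> w. 0 < \<epsilon> \<longrightarrow> \<epsilon> < e \<longrightarrow> w \<in> S \<longrightarrow> norm (f \<epsilon> w) \<le> C * \<epsilon> ^ k))"

lemma bndI: "0 < e \<Longrightarrow> (\<And>\<epsilon> w. 0 < \<epsilon> \<Longrightarrow> \<epsilon> < e \<Longrightarrow> w \<in> S \<Longrightarrow> norm (f \<epsilon> w) \<le> C * \<epsilon> ^ k) \<Longrightarrow> bnd S f k"
  unfolding bnd_def by blast

lemma bndE:
  assumes "bnd S f k"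
  obtains C e where "0 < e" "0 \<le> C" "\<And>\<epsilon> w. 0 < \<epsilon> \<Longrightarrow> \<epsilon> < e \<Longrightarrow> w \<in> S \<Longrightarrow> norm (f \<epsilon> w) \<le> C * \<epsilon> ^ k"
proof -
  obtain C e where e: "0 < e" and h: "\<And>\<epsilon> w. 0 < \<epsilon> \<Longrightarrow> \<epsilon> < e \<Longrightarrow> w \<in> S \<Longrightarrow> norm (f \<epsilon> w) \<le> C * \<epsilon> ^ k"
    using assms unfolding bnd_def by blast
  have "norm (f \<epsilon> w) \<le> \<bar>C\<bar> * \<epsilon> ^ k" if "0 < \<epsilon>" "\<epsilon> < e" "w \<in> S" for \<epsilon> w
  proof -
    have "C * \<epsilon> ^ k \<le> \<bar>C\<bar> * \<epsilon> ^ k" using that by (intro mult_right_mono) auto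
    then show ?thesis using h[OF that] by linarith
  qed
  then show ?thesis using that[of e "\<bar>C\<bar>"] e by auto
qed

lemma bnd_add: "bnd S f k \<Longrightarrow> bnd S g k \<Longrightarrow> bnd S (\<lambda>\<epsilon> w. f \<epsilon> w + g \<epsilon> w) k"
proof -
  assume "bnd S f k" "bnd S g k"
  then obtain C1 e1 C2 e2 where e: "0 < e1" "0 < e2"
    and h1: "\<And>\<epsilon> w. 0 < \<epsilon> \<Longrightarrow> \<epsilon> < e1 \<Longrightarrow> w \<in> S \<Longrightarrow> norm (f \<epsilon> w) \<le> C1 * \<epsilon> ^ k"
    and h2: "\<And>\<epsilon> w. 0 < \<epsilon> \<Longrightarrow> \<epsilon> < e2 \<Longrightarrow> w \<in> S \<Longrightarrow> norm (g \<epsilon> w) \<le> C2 * \<epsilon> ^ k"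
    by (metis bndE)
  show ?thesis
  proof (rule bndI[of "min e1 e2" _ _ "C1 + C2"])
    fix \<epsilon> w assume a: "0 < \<epsilon>" "\<epsilon> < min e1 e2" "w \<in> S"
    have "norm (f \<epsilon> w + g \<epsilon> w) \<le> norm (f \<epsilon> w) + norm (g \<epsilon> w)" by (rule norm_triangle_ineq)
    also have "\<dots> \<le> C1 * \<epsilon> ^ k + C2 * \<epsilon> ^ k" using h1[of \<epsilon> w] h2[of \<epsilon> w] a by auto
    finally show "norm (f \<epsilon> w + g \<epsilon> w) \<le> (C1 + C2) * \<epsilon> ^ k" by (simp add: algebra_simps)
  qed (use e in auto)
qed

lemma bnd_uminus: "bnd S f k \<Longrightarrow> bnd S (\<lambda>\<epsilon> w. - f \<epsilon> w) k"
  unfolding bnd_def by simp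

lemma bnd_diff: "bnd S f k \<Longrightarrow> bnd S g k \<Longrightarrow> bnd S (\<lambda>\<epsilon> w. f \<epsilon> w - g \<epsilon> w) k"
  using bnd_add[of S f k "\<lambda>\<epsilon> w. - g \<epsilon> w"] bnd_uminus[of S g k] by simp

lemma bnd_mult: "bnd S f k \<Longrightarrow> bnd S g l \<Longrightarrow> bnd S (\<lambda>\<epsilon> w. f \<epsilon> w * g \<epsilon> w) (k + l)"
proof -
  assume "bnd S f k" "bnd S g l"
  then obtain C1 e1 C2 e2 where e: "0 < e1" "0 < e2" "0 \<le> C1"
    and h1: "\<And>\<epsilon> w. 0 < \<epsilon> \<Longrightarrow> \<epsilon> < e1 \<Longrightarrow> w \<in> S \<Longrightarrow> norm (f \<epsilon> w) \<le> C1 * \<epsilon> ^ k"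
    and h2: "\<And>\<epsilon> w. 0 < \<epsilon> \<Longrightarrow> \<epsilon> < e2 \<Longrightarrow> w \<in> S \<Longrightarrow> norm (g \<epsilon> w) \<le> C2 * \<epsilon> ^ l"
    by (metis bndE)
  show ?thesis
  proof (rule bndI[of "min e1 e2" _ _ "C1 * C2"])
    fix \<epsilon> w assume a: "0 < \<epsilon>" "\<epsilon> < min e1 e2" "w \<in> S"
    have "norm (f \<epsilon> w * g \<epsilon> w) = norm (f \<epsilon> w) * norm (g \<epsilon> w)" by (rule norm_mult)
    also have "\<dots> \<le> (C1 * \<epsilon> ^ k) * (C2 * \<epsilon> ^ l)"
      using h1[of \<epsilon> w] h2[of \<epsilon> w] a e by (intro mult_mono) auto
    finally show "norm (f \<epsilon> w * g \<epsilon> w) \<le> (C1 * C2) * \<epsilon> ^ (k + l)" by (simp add: algebra_simps power_add)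
  qed (use e in auto)
qed

lemma bnd_mono: "bnd S f k \<Longrightarrow> l \<le> k \<Longrightarrow> bnd S f l"
proof -
  assume "bnd S f k" "l \<le> k"
  then obtain C e where e: "0 < e" "0 \<le> C"
    and h: "\<And>\<epsilon> w. 0 < \<epsilon> \<Longrightarrow> \<epsilon> < e \<Longrightarrow> w \<in> S \<Longrightarrow> norm (f \<epsilon> w) \<le> C * \<epsilon> ^ k"
    by (metis bndE)
  show ?thesis
  proof (rule bndI[of "min e 1" _ _ C])
    fix \<epsilon> w assume a: "0 < \<epsilon>" "\<epsilon> < min e 1" "w \<in> S"
    have "\<epsilon> ^ k \<le> \<epsilon> ^ l" using a \<open>l \<le> k\<close> by (intro power_decreasing) auto
    then have "C * \<epsilon> ^ k \<le> C * \<epsilon> ^ l" using e by (intro mult_left_mono) auto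
    then show "norm (f \<epsilon> w) \<le> C * \<epsilon> ^ l" using h[of \<epsilon> w] a by auto
  qed (use e in auto)
qed

lemma bnd_const: "bnd S (\<lambda>\<epsilon> w. c) 0"
  by (rule bndI[of 1 _ _ "norm c"]) auto

lemma bnd_eps: "bnd S (\<lambda>\<epsilon> w. of_real \<epsilon>) 1"
  by (rule bndI[of 1 _ _ 1]) auto

lemma bnd_fun: "(\<And>w. w \<in> S \<Longrightarrow> norm (g w) \<le> M) \<Longrightarrow> bnd S (\<lambda>\<epsilon> w. g w) 0"
  by (rule bndI[of 1 _ _ M]) auto

lemma bnd_cong: "bnd S f k \<Longrightarrow> (\<And>\<epsilon> w. 0 < \<epsilon> \<Longrightarrow> w \<in> S \<Longrightarrow> g \<epsilon> w = f \<epsilon> w) \<Longrightarrow> bnd S g k"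
  unfolding bnd_def by (metis (no_types, lifting))

lemma bnd_div_eps: "bnd S f (Suc k) \<Longrightarrow> bnd S (\<lambda>\<epsilon> w. f \<epsilon> w / of_real \<epsilon>) k"
proof -
  assume "bnd S f (Suc k)"
  then obtain C e where e: "0 < e"
    and h: "\<And>\<epsilon> w. 0 < \<epsilon> \<Longrightarrow> \<epsilon> < e \<Longrightarrow> w \<in> S \<Longrightarrow> norm (f \<epsilon> w) \<le> C * \<epsilon> ^ Suc k"
    by (metis bndE)
  show ?thesis
  proof (rule bndI[of e _ _ C])
    fix \<epsilon> w assume a: "0 < \<epsilon>" "\<epsilon> < e" "w \<in> S"
    have "norm (f \<epsilon> w / of_real \<epsilon>) = norm (f \<epsilon> w) / \<epsilon>" using a by (simp add: norm_divide)
    also have "\<dots> \<le> C * \<epsilon> ^ Suc k / \<epsilon>" using h[OF a] a by (intro divide_right_mono) auto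
    also have "\<dots> = C * \<epsilon> ^ k" using a by simp
    finally show "norm (f \<epsilon> w / of_real \<epsilon>) \<le> C * \<epsilon> ^ k" .
  qed (use e in auto)
qed

lemma bnd_taylor:
  assumes phi: "\<And>z. z \<noteq> 0 \<Longrightarrow> norm z \<le> 1 \<Longrightarrow> norm (\<phi> z) \<le> C * norm z ^ k"
    and S: "bounded S" "0 \<notin> S" and a: "a \<noteq> 0"
  shows "bnd S (\<lambda>\<epsilon> w. \<phi> (of_real \<epsilon> * a * w)) k"
proof -
  obtain M where M: "0 < M" "\<And>w. w \<in> S \<Longrightarrow> norm w \<le> M" using S(1) bounded_pos by blast
  define e where "e = 1 / (norm a * M)"
  have e: "0 < e" using a M by (simp add: e_def)
  show ?thesis
  proof (rule bndI[OF e, of _ _ "\<bar>C\<bar> * (norm a * M) ^ k"])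
    fix \<epsilon> w assume h: "0 < \<epsilon>" "\<epsilon> < e" "w \<in> S"
    have w0: "w \<noteq> 0" using h S by auto
    have nz: "norm (of_real \<epsilon> * a * w) = \<epsilon> * (norm a * norm w)" using h by (simp add: norm_mult)
    have le: "\<epsilon> * (norm a * norm w) \<le> \<epsilon> * (norm a * M)" using h M by (intro mult_left_mono) auto
    have "\<epsilon> * (norm a * M) < e * (norm a * M)" using h a M by (intro mult_strict_right_mono) auto
    then have lt1: "\<epsilon> * (norm a * M) < 1" using a M by (simp add: e_def)
    have "norm (\<phi> (of_real \<epsilon> * a * w)) \<le> C * norm (of_real \<epsilon> * a * w) ^ k"
    proof (rule phi)
      show "of_real \<epsilon> * a * w \<noteq> 0" using h a w0 by simp
      show "norm (of_real \<epsilon> * a * w) \<le> 1" using nz le lt1 by linarith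
    qed
    also have "\<dots> \<le> \<bar>C\<bar> * (\<epsilon> * (norm a * M)) ^ k"
      unfolding nz using le h M(2)[OF h(3)] by (intro mult_mono power_mono) auto
    also have "\<dots> = \<bar>C\<bar> * (norm a * M) ^ k * \<epsilon> ^ k" by (simp add: power_mult_distrib)
    finally show "norm (\<phi> (of_real \<epsilon> * a * w)) \<le> \<bar>C\<bar> * (norm a * M) ^ k * \<epsilon> ^ k" .
  qed
qed

definition G1 :: "real \<Rightarrow> real \<Rightarrow> complex \<Rightarrow> real \<Rightarrow> complex" where
  "G1 a b w \<epsilon> = (of_real a * w)^2 * pf (of_real \<epsilon> * of_real a * w) - (1 - \<i> * of_real \<epsilon> * of_real b * w) * sincf (of_real \<epsilon> * of_real a * w)"

definition WYf :: "real \<Rightarrow> real \<Rightarrow> real \<Rightarrow> complex \<Rightarrow> real \<Rightarrow> complex" where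
  "WYf a2 b2 \<tau> w \<epsilon> = sincf (of_real \<epsilon> * of_real b2 * w) * qf (of_real \<epsilon> * of_real a2 * w)
     - of_real \<epsilon>^4 * (of_real a2 * w)^2 * cos (of_real \<epsilon> * of_real a2 * w) * pf (of_real \<epsilon> * of_real b2 * w) / of_real \<tau>^2"

definition Vf :: "real \<Rightarrow> real \<Rightarrow> real \<Rightarrow> complex \<Rightarrow> real \<Rightarrow> complex" where
  "Vf a2 b2 \<tau> w \<epsilon> = (of_real a2 * w)^3 * sincf (of_real \<epsilon> * of_real b2 * w) * pf (of_real \<epsilon> * of_real a2 * w)
     - of_real \<epsilon>^2 * (of_real a2 * w)^2 * (of_real b2 * w) * sincf (of_real \<epsilon> * of_real a2 * w) * pf (of_real \<epsilon> * of_real b2 * w) / of_real \<tau>"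

definition G2 :: "real \<Rightarrow> real \<Rightarrow> real \<Rightarrow> real \<Rightarrow> real \<Rightarrow> complex \<Rightarrow> real \<Rightarrow> complex" where
  "G2 a1 a2 b1 b2 \<tau> w \<epsilon> = (of_real a1 * w)^2 * pf (of_real \<epsilon> * of_real a1 * w) * WYf a2 b2 \<tau> w \<epsilon>
     - qf (of_real \<epsilon> * of_real a1 * w) * Vf a2 b2 \<tau> w \<epsilon> / (of_real a1 * w)
     - (1 - \<i> * of_real \<epsilon> * (of_real b1 * w)) * (sincf (of_real \<epsilon> * of_real a1 * w) * WYf a2 b2 \<tau> w \<epsilon>
          - of_real \<epsilon>^2 * cos (of_real \<epsilon> * of_real a1 * w) * Vf a2 b2 \<tau> w \<epsilon> / (of_real a1 * w))"


lemma bnd_mult': "bnd S f k \<Longrightarrow> bnd S g l \<Longrightarrow> m = k + l \<Longrightarrow> bnd S (\<lambda>\<epsilon> w. f \<epsilon> w * g \<epsilon> w) m"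
  using bnd_mult by blast

lemma bnd_pf: "bounded S \<Longrightarrow> 0 \<notin> S \<Longrightarrow> a \<noteq> 0 \<Longrightarrow> bnd S (\<lambda>\<epsilon> w. pf (of_real \<epsilon> * of_real a * w) - 1/3) 2"
  using bnd_taylor[of "\<lambda>z. pf z - 1/3" 6 2 S "of_real a"] pf_bd by simp

lemma bnd_sinc: "bounded S \<Longrightarrow> 0 \<notin> S \<Longrightarrow> a \<noteq> 0 \<Longrightarrow> bnd S (\<lambda>\<epsilon> w. sincf (of_real \<epsilon> * of_real a * w) - 1) 2"
  using bnd_taylor[of "\<lambda>z. sincf z - 1" 3 2 S "of_real a"] sincf_bd by simp

lemma bnd_qf: "bounded S \<Longrightarrow> 0 \<notin> S \<Longrightarrow> a \<noteq> 0 \<Longrightarrow> bnd S (\<lambda>\<epsilon> w. qf (of_real \<epsilon> * of_real a * w) - 1) 2"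
  using bnd_taylor[of "\<lambda>z. qf z - 1" 6 2 S "of_real a"] qf_bd by simp

lemma bnd_cos: "bounded S \<Longrightarrow> 0 \<notin> S \<Longrightarrow> a \<noteq> 0 \<Longrightarrow> bnd S (\<lambda>\<epsilon> w. cos (of_real \<epsilon> * of_real a * w)) 0"
  using bnd_taylor[of "\<lambda>z. cos z" 4 0 S "of_real a"] cos_bd by simp

lemma bnd_shift0: "bnd S (\<lambda>\<epsilon> w. f \<epsilon> w - c) k \<Longrightarrow> bnd S f 0"
proof -
  assume "bnd S (\<lambda>\<epsilon> w. f \<epsilon> w - c) k"
  then have "bnd S (\<lambda>\<epsilon> w. (f \<epsilon> w - c) + c) 0" by (intro bnd_add bnd_const) (erule bnd_mono, simp)
  then show ?thesis by simp
qed

lemma bnd_w: "bounded S \<Longrightarrow> bnd S (\<lambda>\<epsilon> w. g * w) 0"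
proof -
  assume "bounded S"
  then obtain M where M: "\<And>w. w \<in> S \<Longrightarrow> norm w \<le> M" by (meson bounded_iff)
  show ?thesis by (rule bnd_fun[of S "\<lambda>w. g * w" "norm g * M"]) (use M in \<open>auto simp: norm_mult intro!: mult_left_mono\<close>)
qed

lemma bnd_invw: "(\<And>w. w \<in> S \<Longrightarrow> m \<le> norm w) \<Longrightarrow> 0 < m \<Longrightarrow> g \<noteq> 0 \<Longrightarrow> bnd S (\<lambda>\<epsilon> w. 1 / (g * w)) 0"
proof -
  assume m: "\<And>w. w \<in> S \<Longrightarrow> m \<le> norm w" "0 < m" "g \<noteq> 0"
  show ?thesis
  proof (rule bnd_fun[of S "\<lambda>w. 1 / (g * w)" "1 / (norm g * m)"])
    fix w assume w: "w \<in> S"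
    have "norm g * m \<le> norm g * norm w" using m(1)[OF w] by (intro mult_left_mono) auto
    moreover have "0 < norm g * m" using m by simp
    ultimately show "norm (1 / (g * w)) \<le> 1 / (norm g * m)"
      by (simp add: norm_divide norm_mult frac_le)
  qed
qed

lemma bnd_G1:
  assumes S: "bounded S" "0 \<notin> S" and a: "a1 \<noteq> 0"
  shows "bnd S (\<lambda>\<epsilon> w. G1 a1 b1 w \<epsilon> - (of_real (a1^2/3) * w^2 + \<i> * of_real \<epsilon> * of_real b1 * w - 1)) 2"
proof -
  have A2: "bnd S (\<lambda>\<epsilon> w. (of_real a1 * w) * (of_real a1 * w)) 0"
    by (rule bnd_mult'[OF bnd_w[OF S(1)] bnd_w[OF S(1)]]) simp
  have L: "bnd S (\<lambda>\<epsilon> w. 1 - of_real \<epsilon> * (\<i> * of_real b1 * w)) 0"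
    by (intro bnd_diff bnd_const) (rule bnd_mono[OF bnd_mult'[OF bnd_eps bnd_w[OF S(1)]]], auto)
  have "bnd S (\<lambda>\<epsilon> w. (of_real a1 * w) * (of_real a1 * w) * (pf (of_real \<epsilon> * of_real a1 * w) - 1/3)
        - (1 - of_real \<epsilon> * (\<i> * of_real b1 * w)) * (sincf (of_real \<epsilon> * of_real a1 * w) - 1)) 2"
    by (intro bnd_diff bnd_mult'[OF A2 bnd_pf[OF S a]] bnd_mult'[OF L bnd_sinc[OF S a]]) auto
  then show ?thesis
    by (rule bnd_cong) (simp add: G1_def algebra_simps power2_eq_square)
qed

lemma bnd_eps_pow: "bnd S (\<lambda>\<epsilon> w. of_real \<epsilon> ^ n) n"
proof (induction n)
  case 0 then show ?case using bnd_const[of S 1] by simp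
next
  case (Suc n)
  have "bnd S (\<lambda>\<epsilon> w. of_real \<epsilon> * of_real \<epsilon> ^ n) (1 + n)" by (rule bnd_mult[OF bnd_eps Suc])
  then show ?case by simp
qed

lemma bnd_cmult: "bnd S f k \<Longrightarrow> bnd S (\<lambda>\<epsilon> w. c * f \<epsilon> w) k"
proof -
  assume h: "bnd S f k"
  show ?thesis by (rule bnd_mult'[OF bnd_const h]) simp
qed

lemma bnd_shift0': "bnd S (\<lambda>\<epsilon> w. f \<epsilon> w - g \<epsilon> w) k \<Longrightarrow> bnd S g 0 \<Longrightarrow> bnd S f 0"
proof -
  assume h: "bnd S (\<lambda>\<epsilon> w. f \<epsilon> w - g \<epsilon> w) k" "bnd S g 0"
  have "bnd S (\<lambda>\<epsilon> w. (f \<epsilon> w - g \<epsilon> w) + g \<epsilon> w) 0" by (intro bnd_add h(2)) (rule bnd_mono[OF h(1)], simp)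
  then show ?thesis by simp
qed

lemma bnd_WY:
  assumes S: "bounded S" "0 \<notin> S" and a: "a2 \<noteq> 0" "b2 \<noteq> 0"
  shows "bnd S (\<lambda>\<epsilon> w. WYf a2 b2 \<tau> w \<epsilon> - 1) 2"
proof -
  have Q0: "bnd S (\<lambda>\<epsilon> w. qf (of_real \<epsilon> * of_real a2 * w)) 0" by (rule bnd_shift0[OF bnd_qf[OF S a(1)]])
  have P0: "bnd S (\<lambda>\<epsilon> w. pf (of_real \<epsilon> * of_real b2 * w)) 0" by (rule bnd_shift0[OF bnd_pf[OF S a(2)]])
  have R0: "bnd S (\<lambda>\<epsilon> w. (of_real a2 * w) * (of_real a2 * w) * cos (of_real \<epsilon> * of_real a2 * w) * pf (of_real \<epsilon> * of_real b2 * w) * (1 / of_real \<tau>^2)) 0"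
    by (intro bnd_mult'[OF _ bnd_const] bnd_mult'[OF _ P0] bnd_mult'[OF _ bnd_cos[OF S a(1)]] bnd_mult'[OF bnd_w[OF S(1)] bnd_w[OF S(1)]]) auto
  have X1: "bnd S (\<lambda>\<epsilon> w. (sincf (of_real \<epsilon> * of_real b2 * w) - 1) * qf (of_real \<epsilon> * of_real a2 * w)) 2"
    by (rule bnd_mult'[OF bnd_sinc[OF S a(2)] Q0]) simp
  have X2: "bnd S (\<lambda>\<epsilon> w. of_real \<epsilon> ^ 4 * ((of_real a2 * w) * (of_real a2 * w) * cos (of_real \<epsilon> * of_real a2 * w) * pf (of_real \<epsilon> * of_real b2 * w) * (1 / of_real \<tau>^2))) 2"
    by (rule bnd_mono[OF bnd_mult'[OF bnd_eps_pow R0]]) auto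
  have "bnd S (\<lambda>\<epsilon> w. (sincf (of_real \<epsilon> * of_real b2 * w) - 1) * qf (of_real \<epsilon> * of_real a2 * w) + (qf (of_real \<epsilon> * of_real a2 * w) - 1)
          - of_real \<epsilon> ^ 4 * ((of_real a2 * w) * (of_real a2 * w) * cos (of_real \<epsilon> * of_real a2 * w) * pf (of_real \<epsilon> * of_real b2 * w) * (1 / of_real \<tau>^2))) 2"
    by (rule bnd_diff[OF bnd_add[OF X1 bnd_qf[OF S a(1)]] X2])
  then show ?thesis by (rule bnd_cong) (simp add: WYf_def algebra_simps power2_eq_square)
qed

lemma bnd_V:
  assumes S: "bounded S" "0 \<notin> S" and a: "a2 \<noteq> 0" "b2 \<noteq> 0"
  shows "bnd S (\<lambda>\<epsilon> w. Vf a2 b2 \<tau> w \<epsilon> - (of_real a2 * w)^3 / 3) 2"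
proof -
  have P0: "bnd S (\<lambda>\<epsilon> w. pf (of_real \<epsilon> * of_real b2 * w)) 0" by (rule bnd_shift0[OF bnd_pf[OF S a(2)]])
  have Px0: "bnd S (\<lambda>\<epsilon> w. pf (of_real \<epsilon> * of_real a2 * w)) 0" by (rule bnd_shift0[OF bnd_pf[OF S a(1)]])
  have Sx0: "bnd S (\<lambda>\<epsilon> w. sincf (of_real \<epsilon> * of_real a2 * w)) 0" by (rule bnd_shift0[OF bnd_sinc[OF S a(1)]])
  have B3: "bnd S (\<lambda>\<epsilon> w. (of_real a2 * w) * (of_real a2 * w) * (of_real a2 * w)) 0"
    by (intro bnd_mult'[OF _ bnd_w[OF S(1)]] bnd_mult'[OF bnd_w[OF S(1)] bnd_w[OF S(1)]]) auto
  have R0: "bnd S (\<lambda>\<epsilon> w. (of_real a2 * w) * (of_real a2 * w) * (of_real b2 * w) * sincf (of_real \<epsilon> * of_real a2 * w) * pf (of_real \<epsilon> * of_real b2 * w) * (1 / of_real \<tau>)) 0"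
    by (intro bnd_mult'[OF _ bnd_const] bnd_mult'[OF _ P0] bnd_mult'[OF _ Sx0] bnd_mult'[OF _ bnd_w[OF S(1)]] bnd_mult'[OF bnd_w[OF S(1)] bnd_w[OF S(1)]]) auto
  have X1: "bnd S (\<lambda>\<epsilon> w. (sincf (of_real \<epsilon> * of_real b2 * w) - 1) * pf (of_real \<epsilon> * of_real a2 * w)) 2"
    by (rule bnd_mult'[OF bnd_sinc[OF S a(2)] Px0]) simp
  have X2: "bnd S (\<lambda>\<epsilon> w. (sincf (of_real \<epsilon> * of_real b2 * w) - 1) * pf (of_real \<epsilon> * of_real a2 * w) + (pf (of_real \<epsilon> * of_real a2 * w) - 1/3)) 2"
    by (rule bnd_add[OF X1 bnd_pf[OF S a(1)]])
  have X3: "bnd S (\<lambda>\<epsilon> w. (of_real a2 * w) * (of_real a2 * w) * (of_real a2 * w) *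
            ((sincf (of_real \<epsilon> * of_real b2 * w) - 1) * pf (of_real \<epsilon> * of_real a2 * w) + (pf (of_real \<epsilon> * of_real a2 * w) - 1/3))) 2"
    by (rule bnd_mult'[OF B3 X2]) simp
  have X4: "bnd S (\<lambda>\<epsilon> w. of_real \<epsilon> ^ 2 * ((of_real a2 * w) * (of_real a2 * w) * (of_real b2 * w) * sincf (of_real \<epsilon> * of_real a2 * w) * pf (of_real \<epsilon> * of_real b2 * w) * (1 / of_real \<tau>))) 2"
    by (rule bnd_mult'[OF bnd_eps_pow R0]) simp
  have "bnd S (\<lambda>\<epsilon> w. (of_real a2 * w) * (of_real a2 * w) * (of_real a2 * w) *
            ((sincf (of_real \<epsilon> * of_real b2 * w) - 1) * pf (of_real \<epsilon> * of_real a2 * w) + (pf (of_real \<epsilon> * of_real a2 * w) - 1/3))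
          - of_real \<epsilon> ^ 2 * ((of_real a2 * w) * (of_real a2 * w) * (of_real b2 * w) * sincf (of_real \<epsilon> * of_real a2 * w) * pf (of_real \<epsilon> * of_real b2 * w) * (1 / of_real \<tau>))) 2"
    by (rule bnd_diff[OF X3 X4])
  then show ?thesis by (rule bnd_cong) (simp add: Vf_def algebra_simps power2_eq_square power3_eq_cube)
qed

lemma bnd_G2:
  assumes S: "bounded S" "0 \<notin> S" and m: "\<And>w. w \<in> S \<Longrightarrow> m \<le> norm w" "0 < m"
    and a: "a1 \<noteq> 0" "a2 \<noteq> 0" "b2 \<noteq> 0"
  shows "bnd S (\<lambda>\<epsilon> w. G2 a1 a2 b1 b2 \<tau> w \<epsilon> - (of_real ((a1^3 - a2^3) / (3 * a1)) * w^2 + \<i> * of_real \<epsilon> * of_real b1 * w - 1)) 2"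
proof -
  have WY0: "bnd S (\<lambda>\<epsilon> w. WYf a2 b2 \<tau> w \<epsilon>) 0" by (rule bnd_shift0[OF bnd_WY[OF S a(2,3)]])
  have B3: "bnd S (\<lambda>\<epsilon> w. (of_real a2 * w)^3 / 3) 0"
    by (rule bnd_cong[OF bnd_mult'[OF bnd_mult'[OF bnd_mult'[OF bnd_w[OF S(1)] bnd_w[OF S(1)]] bnd_w[OF S(1)]] bnd_const[of S "1/3"]]])
       (auto simp: power3_eq_cube)
  have V0: "bnd S (\<lambda>\<epsilon> w. Vf a2 b2 \<tau> w \<epsilon>) 0" by (rule bnd_shift0'[OF bnd_V[OF S a(2,3)] B3])
  have Q0: "bnd S (\<lambda>\<epsilon> w. qf (of_real \<epsilon> * of_real a1 * w)) 0" by (rule bnd_shift0[OF bnd_qf[OF S a(1)]])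
  have IA: "bnd S (\<lambda>\<epsilon> w. 1 / (of_real a1 * w)) 0" using a m by (intro bnd_invw[OF m]) auto
  have A2: "bnd S (\<lambda>\<epsilon> w. (of_real a1 * w) * (of_real a1 * w)) 0"
    by (rule bnd_mult'[OF bnd_w[OF S(1)] bnd_w[OF S(1)]]) simp
  have L: "bnd S (\<lambda>\<epsilon> w. 1 - of_real \<epsilon> * (\<i> * of_real b1 * w)) 0"
    by (intro bnd_diff bnd_const) (rule bnd_mono[OF bnd_mult'[OF bnd_eps bnd_w[OF S(1)]]], auto)
  have WY2: "bnd S (\<lambda>\<epsilon> w. WYf a2 b2 \<tau> w \<epsilon> - 1) 2" by (rule bnd_WY[OF S a(2,3)])
  have V2: "bnd S (\<lambda>\<epsilon> w. Vf a2 b2 \<tau> w \<epsilon> - (of_real a2 * w)^3 / 3) 2" by (rule bnd_V[OF S a(2,3)])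
  have T1a: "bnd S (\<lambda>\<epsilon> w. (pf (of_real \<epsilon> * of_real a1 * w) - 1/3) * WYf a2 b2 \<tau> w \<epsilon>) 2"
    by (rule bnd_mult'[OF bnd_pf[OF S a(1)] WY0]) simp
  have T1: "bnd S (\<lambda>\<epsilon> w. (of_real a1 * w) * (of_real a1 * w) * ((pf (of_real \<epsilon> * of_real a1 * w) - 1/3) * WYf a2 b2 \<tau> w \<epsilon> + (1/3) * (WYf a2 b2 \<tau> w \<epsilon> - 1))) 2"
    by (rule bnd_mult'[OF A2 bnd_add[OF T1a bnd_cmult[OF WY2]]]) simp
  have T2a: "bnd S (\<lambda>\<epsilon> w. (qf (of_real \<epsilon> * of_real a1 * w) - 1) * Vf a2 b2 \<tau> w \<epsilon>) 2"
    by (rule bnd_mult'[OF bnd_qf[OF S a(1)] V0]) simp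
  have T2: "bnd S (\<lambda>\<epsilon> w. ((qf (of_real \<epsilon> * of_real a1 * w) - 1) * Vf a2 b2 \<tau> w \<epsilon> + (Vf a2 b2 \<tau> w \<epsilon> - (of_real a2 * w)^3 / 3)) * (1 / (of_real a1 * w))) 2"
    by (rule bnd_mult'[OF bnd_add[OF T2a V2] IA]) simp
  have T3a: "bnd S (\<lambda>\<epsilon> w. (sincf (of_real \<epsilon> * of_real a1 * w) - 1) * WYf a2 b2 \<tau> w \<epsilon>) 2"
    by (rule bnd_mult'[OF bnd_sinc[OF S a(1)] WY0]) simp
  have T3b: "bnd S (\<lambda>\<epsilon> w. cos (of_real \<epsilon> * of_real a1 * w) * Vf a2 b2 \<tau> w \<epsilon> * (1 / (of_real a1 * w))) 0"
    by (rule bnd_mult'[OF bnd_mult'[OF bnd_cos[OF S a(1)] V0] IA]) simp_all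
  have T3c: "bnd S (\<lambda>\<epsilon> w. of_real \<epsilon> ^ 2 * (cos (of_real \<epsilon> * of_real a1 * w) * Vf a2 b2 \<tau> w \<epsilon> * (1 / (of_real a1 * w)))) 2"
    by (rule bnd_mult'[OF bnd_eps_pow T3b]) simp
  have T3: "bnd S (\<lambda>\<epsilon> w. (1 - of_real \<epsilon> * (\<i> * of_real b1 * w)) * ((sincf (of_real \<epsilon> * of_real a1 * w) - 1) * WYf a2 b2 \<tau> w \<epsilon> + (WYf a2 b2 \<tau> w \<epsilon> - 1)
          - of_real \<epsilon> ^ 2 * (cos (of_real \<epsilon> * of_real a1 * w) * Vf a2 b2 \<tau> w \<epsilon> * (1 / (of_real a1 * w))))) 2"
    by (rule bnd_mult'[OF L bnd_diff[OF bnd_add[OF T3a WY2] T3c]]) simp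
  have "bnd S (\<lambda>\<epsilon> w. (of_real a1 * w) * (of_real a1 * w) * ((pf (of_real \<epsilon> * of_real a1 * w) - 1/3) * WYf a2 b2 \<tau> w \<epsilon> + (1/3) * (WYf a2 b2 \<tau> w \<epsilon> - 1))
     - ((qf (of_real \<epsilon> * of_real a1 * w) - 1) * Vf a2 b2 \<tau> w \<epsilon> + (Vf a2 b2 \<tau> w \<epsilon> - (of_real a2 * w)^3 / 3)) * (1 / (of_real a1 * w))
     - (1 - of_real \<epsilon> * (\<i> * of_real b1 * w)) * ((sincf (of_real \<epsilon> * of_real a1 * w) - 1) * WYf a2 b2 \<tau> w \<epsilon> + (WYf a2 b2 \<tau> w \<epsilon> - 1)
          - of_real \<epsilon> ^ 2 * (cos (of_real \<epsilon> * of_real a1 * w) * Vf a2 b2 \<tau> w \<epsilon> * (1 / (of_real a1 * w))))) 2"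
    by (intro bnd_diff T1 T2 T3)
  then show ?thesis
    apply (rule bnd_cong)
    subgoal for \<epsilon> w
      using a S(2) by (cases "w = 0") (auto simp: G2_def field_simps power2_eq_square power3_eq_cube)
    done
qed



lemma contr_step:
  fixes F :: "complex \<Rightarrow> real \<Rightarrow> complex" and \<alpha> \<beta> c R e1 K \<rho> M \<epsilon> :: real
  assumes apos: "0 < \<alpha>" and cpos: "0 < c" and ac: "\<alpha> * c^2 = 1" and Rpos: "0 < R"
    and hol: "(\<lambda>w. F w \<epsilon>) holomorphic_on ball (of_real c) R"
    and bd: "\<And>w. w \<in> ball (of_real c) R \<Longrightarrow> norm (F w \<epsilon> - (of_real \<alpha> * w^2 + \<i> * of_real \<epsilon> * of_real \<beta> * w - 1)) \<le> K * \<epsilon>^2"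
    and rho: "\<rho> = min (c/4) (R/4)" and Mdef: "M = \<bar>\<beta>\<bar> * c + \<bar>K\<bar> + \<bar>\<beta>\<bar> + \<bar>K\<bar> / (R/2) + 1"
    and eps: "0 < \<epsilon>" "\<epsilon> \<le> 1" "\<epsilon> * M \<le> \<alpha> * c * min \<rho> (1/2)"
  shows "\<forall>w1\<in>cball (of_real c) \<rho>. \<forall>w2\<in>cball (of_real c) \<rho>.
           norm ((w1 - F w1 \<epsilon> / of_real (2*\<alpha>*c)) - (w2 - F w2 \<epsilon> / of_real (2*\<alpha>*c))) \<le> 1/2 * norm (w1 - w2)"
    and "norm ((of_real c - F (of_real c) \<epsilon> / of_real (2*\<alpha>*c)) - of_real c) \<le> \<rho> / 2"
proof -
  define c' where "c' = (of_real c :: complex)"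
  define r where "r = R / 2"
  define T where "T = (\<lambda>w. w - F w \<epsilon> / of_real (2*\<alpha>*c))"
  define P where "P = (\<lambda>w. of_real \<alpha> * w^2 + \<i> * of_real \<epsilon> * of_real \<beta> * w - 1 :: complex)"
  define E where "E = (\<lambda>w. F w \<epsilon> - P w)"
  have rpos: "0 < r" using Rpos by (simp add: r_def)
  have rhopos: "0 < \<rho>" using rho cpos Rpos by simp
  have rho_le: "\<rho> \<le> c/4" "\<rho> \<le> R/4" using rho by auto
  have Mpos: "0 < M"
  proof -
    have "0 \<le> \<bar>\<beta>\<bar> * c" "0 \<le> \<bar>K\<bar> / (R/2)" using cpos Rpos by auto
    then show ?thesis unfolding Mdef by linarith
  qed
  have acpos: "0 < \<alpha> * c" using apos cpos by simp
  have holE: "E holomorphic_on ball c' R"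
    unfolding E_def P_def c'_def by (intro holomorphic_intros hol)
  have Ebd: "norm (E w) \<le> K * \<epsilon>^2" if "w \<in> ball c' R" for w
    using bd[of w] that unfolding E_def P_def c'_def by simp
  have ball_sub: "cball z r \<subseteq> ball c' R" if "z \<in> cball c' \<rho>" for z
  proof
    fix x assume "x \<in> cball z r"
    then have "dist c' x \<le> dist c' z + dist z x" "dist z x \<le> r" "dist c' z \<le> \<rho>" using that dist_triangle by auto
    then show "x \<in> ball c' R" using rho_le rpos unfolding r_def by simp
  qed
  have dE: "norm (deriv E z) \<le> \<bar>K\<bar> * \<epsilon>^2 / r" if z: "z \<in> cball c' \<rho>" for z
  proof -
    have "norm ((deriv ^^ 1) E z) \<le> fact 1 * (\<bar>K\<bar> * \<epsilon>^2) / r ^ 1"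
    proof (rule Cauchy_inequality)
      show "E holomorphic_on ball z r" using holE ball_sub[OF z] ball_subset_cball by (meson holomorphic_on_subset order_trans)
      show "continuous_on (cball z r) E" using holE ball_sub[OF z]
        by (meson holomorphic_on_imp_continuous_on holomorphic_on_subset)
      show "0 < r" by (rule rpos)
      fix x assume "norm (z - x) = r"
      then have "x \<in> ball c' R" using ball_sub[OF z] by (auto simp: dist_norm)
      then have "norm (E x) \<le> K * \<epsilon>^2" by (rule Ebd)
      also have "\<dots> \<le> \<bar>K\<bar> * \<epsilon>^2" by (intro mult_right_mono) auto
      finally show "norm (E x) \<le> \<bar>K\<bar> * \<epsilon>^2" .
    qed
    then show ?thesis by simp
  qed
  have Tder: "(T has_field_derivative (1 - (2 * of_real \<alpha> * z + \<i> * of_real \<epsilon> * of_real \<beta> + deriv E z) / of_real (2*\<alpha>*c))) (at z within cball c' \<rho>)"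
    if z: "z \<in> cball c' \<rho>" for z
  proof -
    have zin: "z \<in> ball c' R" using ball_sub[OF z] rpos by (meson centre_in_cball less_le subsetD)
    have dE: "(E has_field_derivative deriv E z) (at z)"
      using holE zin by (intro holomorphic_derivI[of _ "ball c' R"]) auto
    have eq: "T = (\<lambda>w. w - (P w + E w) / of_real (2*\<alpha>*c))" unfolding T_def E_def by simp
    have dP: "(P has_field_derivative (2 * of_real \<alpha> * z + \<i> * of_real \<epsilon> * of_real \<beta>)) (at z)"
      unfolding P_def by (auto intro!: derivative_eq_intros simp: power2_eq_square)
    have "((\<lambda>w. P w + E w) has_field_derivative (2 * of_real \<alpha> * z + \<i> * of_real \<epsilon> * of_real \<beta> + deriv E z)) (at z)"
      by (rule DERIV_add[OF dP dE])
    then have "((\<lambda>w. (P w + E w) / of_real (2*\<alpha>*c)) has_field_derivative ((2 * of_real \<alpha> * z + \<i> * of_real \<epsilon> * of_real \<beta> + deriv E z) / of_real (2*\<alpha>*c))) (at z)"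
      by (rule DERIV_cdivide)
    then have "(T has_field_derivative (1 - (2 * of_real \<alpha> * z + \<i> * of_real \<epsilon> * of_real \<beta> + deriv E z) / of_real (2*\<alpha>*c))) (at z)"
      unfolding eq by (intro DERIV_diff DERIV_ident)
    then show ?thesis by (rule has_field_derivative_at_within)
  qed
  have Tdn: "norm (1 - (2 * of_real \<alpha> * z + \<i> * of_real \<epsilon> * of_real \<beta> + deriv E z) / of_real (2*\<alpha>*c)) \<le> 1/2"
    if z: "z \<in> cball c' \<rho>" for z
  proof -
    have eq: "1 - (2 * of_real \<alpha> * z + \<i> * of_real \<epsilon> * of_real \<beta> + deriv E z) / of_real (2*\<alpha>*c)
        = (c' - z) / c' - (\<i> * of_real \<epsilon> * of_real \<beta> + deriv E z) / of_real (2*\<alpha>*c)"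
      using apos cpos unfolding c'_def by (simp add: field_simps)
    have n1: "norm ((c' - z) / c') \<le> 1/4"
    proof -
      have "norm (c' - z) \<le> \<rho>" using z by (simp add: dist_norm)
      then have "norm ((c' - z) / c') \<le> \<rho> / c" using cpos by (simp add: norm_divide c'_def divide_right_mono)
      also have "\<dots> \<le> 1/4" using rho_le cpos by (simp add: divide_le_eq)
      finally show ?thesis .
    qed
    have n2: "norm ((\<i> * of_real \<epsilon> * of_real \<beta> + deriv E z) / of_real (2*\<alpha>*c)) \<le> 1/4"
    proof -
      have "norm (\<i> * of_real \<epsilon> * of_real \<beta> + deriv E z) \<le> \<epsilon> * \<bar>\<beta>\<bar> + \<bar>K\<bar> * \<epsilon>^2 / r"
      proof -
        have "norm (\<i> * of_real \<epsilon> * of_real \<beta> :: complex) = \<epsilon> * \<bar>\<beta>\<bar>" using eps by (simp add: norm_mult)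
        moreover have "norm (\<i> * of_real \<epsilon> * of_real \<beta> + deriv E z) \<le> norm (\<i> * of_real \<epsilon> * of_real \<beta> :: complex) + norm (deriv E z)"
          by (rule norm_triangle_ineq)
        ultimately show ?thesis using dE[OF z] by linarith
      qed
      also have "\<dots> \<le> \<epsilon> * M"
      proof -
        have "\<epsilon>^2 \<le> \<epsilon>" using eps by (simp add: power2_eq_square mult_le_cancel_left1)
        then have "\<bar>K\<bar> * \<epsilon>^2 / r \<le> \<bar>K\<bar> * \<epsilon> / r" using rpos by (intro divide_right_mono mult_left_mono) auto
        also have "\<dots> = \<epsilon> * (\<bar>K\<bar> / r)" by simp
        finally have "\<bar>K\<bar> * \<epsilon>^2 / r \<le> \<epsilon> * (\<bar>K\<bar> / r)" .
        moreover have "\<epsilon> * \<bar>\<beta>\<bar> + \<epsilon> * (\<bar>K\<bar> / r) \<le> \<epsilon> * M"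
        proof -
          have "0 \<le> \<bar>\<beta>\<bar> * c" using cpos by simp
          then have "\<bar>\<beta>\<bar> + \<bar>K\<bar> / r \<le> M" unfolding Mdef r_def by simp
          then have "\<epsilon> * (\<bar>\<beta>\<bar> + \<bar>K\<bar> / r) \<le> \<epsilon> * M" using eps by (intro mult_left_mono) auto
          then show ?thesis by (simp add: algebra_simps)
        qed
        ultimately show ?thesis by linarith
      qed
      also have "\<dots> \<le> \<alpha> * c / 2"
      proof -
        have "\<alpha> * c * min \<rho> (1/2) \<le> \<alpha> * c * (1/2)" using acpos by (intro mult_left_mono) auto
        then show ?thesis using eps(3) by linarith
      qed
      finally have "norm (\<i> * of_real \<epsilon> * of_real \<beta> + deriv E z) \<le> \<alpha> * c / 2" .
      moreover have "norm ((\<i> * of_real \<epsilon> * of_real \<beta> + deriv E z) / complex_of_real (2*\<alpha>*c)) = norm (\<i> * of_real \<epsilon> * of_real \<beta> + deriv E z) / (2*\<alpha>*c)"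
        using acpos by (simp only: norm_divide norm_of_real)
      ultimately show ?thesis using acpos by (simp add: divide_le_eq)
    qed
    have "norm ((c' - z) / c' - (\<i> * of_real \<epsilon> * of_real \<beta> + deriv E z) / of_real (2*\<alpha>*c))
        \<le> norm ((c' - z) / c') + norm ((\<i> * of_real \<epsilon> * of_real \<beta> + deriv E z) / of_real (2*\<alpha>*c))"
      by (rule norm_triangle_ineq4)
    then show ?thesis unfolding eq using n1 n2 by linarith
  qed
  show "\<forall>w1\<in>cball (of_real c) \<rho>. \<forall>w2\<in>cball (of_real c) \<rho>.
           norm ((w1 - F w1 \<epsilon> / of_real (2*\<alpha>*c)) - (w2 - F w2 \<epsilon> / of_real (2*\<alpha>*c))) \<le> 1/2 * norm (w1 - w2)"
  proof (intro ballI)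
    fix w1 w2 :: complex assume "w1 \<in> cball (of_real c) \<rho>" "w2 \<in> cball (of_real c) \<rho>"
    then have "norm (T w1 - T w2) \<le> 1/2 * norm (w1 - w2)"
      using field_differentiable_bound[OF convex_cball, of c' \<rho> T _ "1/2", OF Tder Tdn] unfolding c'_def by blast
    then show "norm ((w1 - F w1 \<epsilon> / of_real (2*\<alpha>*c)) - (w2 - F w2 \<epsilon> / of_real (2*\<alpha>*c))) \<le> 1/2 * norm (w1 - w2)"
      unfolding T_def .
  qed
  show "norm ((of_real c - F (of_real c) \<epsilon> / of_real (2*\<alpha>*c)) - of_real c) \<le> \<rho> / 2"
  proof -
    have cin: "c' \<in> ball c' R" using Rpos by simp
    have Pc: "P c' = \<i> * of_real \<epsilon> * of_real \<beta> * c'"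
    proof -
      have "of_real \<alpha> * c'^2 = (1::complex)" using ac unfolding c'_def by (metis of_real_1 of_real_mult of_real_power)
      then show ?thesis unfolding P_def by simp
    qed
    have "norm (F c' \<epsilon>) \<le> norm (P c') + norm (E c')" unfolding E_def using norm_triangle_ineq[of "P c'" "F c' \<epsilon> - P c'"] by simp
    also have "\<dots> \<le> \<epsilon> * \<bar>\<beta>\<bar> * c + \<bar>K\<bar> * \<epsilon>" 
    proof (intro add_mono)
      have "norm (P c') = norm (\<i> * of_real \<epsilon> * of_real \<beta> * c')" using Pc by simp
      also have "\<dots> = \<epsilon> * \<bar>\<beta>\<bar> * c" using eps cpos by (simp add: norm_mult c'_def)
      finally show "norm (P c') \<le> \<epsilon> * \<bar>\<beta>\<bar> * c" by simp
      have "\<epsilon>^2 \<le> \<epsilon>" using eps by (simp add: power2_eq_square mult_le_cancel_left1)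
      then have "\<bar>K\<bar> * \<epsilon>^2 \<le> \<bar>K\<bar> * \<epsilon>" by (intro mult_left_mono) auto
      moreover have "K * \<epsilon>^2 \<le> \<bar>K\<bar> * \<epsilon>^2" by (intro mult_right_mono) auto
      ultimately have "K * \<epsilon>^2 \<le> \<bar>K\<bar> * \<epsilon>" by linarith
      then show "norm (E c') \<le> \<bar>K\<bar> * \<epsilon>" using Ebd[OF cin] by linarith
    qed
    also have "\<dots> \<le> \<epsilon> * M"
    proof -
      have "0 \<le> \<bar>K\<bar> / (R/2)" using Rpos by simp
      then have "\<bar>\<beta>\<bar> * c + \<bar>K\<bar> \<le> M" unfolding Mdef by simp
      then have "\<epsilon> * (\<bar>\<beta>\<bar> * c + \<bar>K\<bar>) \<le> \<epsilon> * M" using eps by (intro mult_left_mono) auto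
      then show ?thesis by (simp add: algebra_simps)
    qed
    also have "\<dots> \<le> \<alpha> * c * \<rho>"
    proof -
      have "\<alpha> * c * min \<rho> (1/2) \<le> \<alpha> * c * \<rho>" using acpos by (intro mult_left_mono) auto
      then show ?thesis using eps(3) by linarith
    qed
    finally have "norm (F c' \<epsilon>) \<le> \<alpha> * c * \<rho>" .
    then have "norm (F c' \<epsilon>) / (2*\<alpha>*c) \<le> (\<alpha> * c * \<rho>) / (2*\<alpha>*c)" using acpos by (intro divide_right_mono) auto
    also have "\<dots> = \<rho> / 2" using apos cpos by (simp add: field_simps)
    finally have "norm (F c' \<epsilon>) / (2*\<alpha>*c) \<le> \<rho> / 2" .
    moreover have "norm ((of_real c - F (of_real c) \<epsilon> / of_real (2*\<alpha>*c)) - of_real c) = norm (F c' \<epsilon>) / (2*\<alpha>*c)"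
    proof -
      have "(of_real c - F (of_real c) \<epsilon> / of_real (2*\<alpha>*c)) - of_real c = - (F c' \<epsilon> / of_real (2*\<alpha>*c))"
        unfolding c'_def by simp
      then have "norm ((of_real c - F (of_real c) \<epsilon> / of_real (2*\<alpha>*c)) - of_real c) = norm (F c' \<epsilon>) / \<bar>2*\<alpha>*c\<bar>"
        by (simp only: norm_minus_cancel norm_divide norm_of_real)
      then show ?thesis using acpos by simp
    qed
    ultimately show ?thesis by simp
  qed
qed


lemma root_lemma:
  fixes F :: "complex \<Rightarrow> real \<Rightarrow> complex" and \<alpha> \<beta> c R e1 K :: real
  assumes apos: "0 < \<alpha>" and cpos: "0 < c" and ac: "\<alpha> * c^2 = 1" and Rpos: "0 < R" and e1pos: "0 < e1"
    and hol: "\<And>\<epsilon>. 0 < \<epsilon> \<Longrightarrow> \<epsilon> < e1 \<Longrightarrow> (\<lambda>w. F w \<epsilon>) holomorphic_on ball (of_real c) R"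
    and bd: "\<And>\<epsilon> w. 0 < \<epsilon> \<Longrightarrow> \<epsilon> < e1 \<Longrightarrow> w \<in> ball (of_real c) R \<Longrightarrow>
               norm (F w \<epsilon> - (of_real \<alpha> * w^2 + \<i> * of_real \<epsilon> * of_real \<beta> * w - 1)) \<le> K * \<epsilon>^2"
    and cont: "\<And>w. w \<in> ball (of_real c) R \<Longrightarrow> continuous_on {0<..<e1} (F w)"
  shows "\<exists>e2>0. \<exists>K2. \<exists>W. continuous_on {0<..<e2} W \<and>
           (\<forall>\<epsilon>\<in>{0<..<e2}. 0 < Re (W \<epsilon>) \<and> F (W \<epsilon>) \<epsilon> = 0 \<and>
              norm (W \<epsilon> - (of_real c - \<i> * of_real \<epsilon> * of_real \<beta> / of_real (2*\<alpha>))) \<le> K2 * \<epsilon>^2)"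
proof -
  define \<rho> where "\<rho> = min (c/4) (R/4)"
  define M where "M = \<bar>\<beta>\<bar> * c + \<bar>K\<bar> + \<bar>\<beta>\<bar> + \<bar>K\<bar> / (R/2) + 1"
  define e2 where "e2 = min e1 (min 1 (\<alpha> * c * min \<rho> (1/2) / M))"
  define c' where "c' = (of_real c :: complex)"
  define T where "T = (\<lambda>\<epsilon> w. w - F w \<epsilon> / of_real (2*\<alpha>*c))"
  have acpos: "0 < \<alpha> * c" using apos cpos by simp
  have Mpos: "0 < M"
  proof -
    have "0 \<le> \<bar>\<beta>\<bar> * c" "0 \<le> \<bar>K\<bar> / (R/2)" using cpos Rpos by auto
    then show ?thesis unfolding M_def by linarith
  qed
  have rhopos: "0 < \<rho>" using cpos Rpos by (simp add: \<rho>_def)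
  have rho_le: "\<rho> \<le> c/4" "\<rho> \<le> R/4" by (auto simp: \<rho>_def)
  have e2pos: "0 < e2" using e1pos acpos rhopos Mpos by (simp add: e2_def)
  have small: "\<epsilon> < e1 \<and> \<epsilon> \<le> 1 \<and> \<epsilon> * M \<le> \<alpha> * c * min \<rho> (1/2)" if "0 < \<epsilon>" "\<epsilon> < e2" for \<epsilon>
  proof -
    have "\<epsilon> < \<alpha> * c * min \<rho> (1/2) / M" using that by (simp add: e2_def)
    then have "\<epsilon> * M < \<alpha> * c * min \<rho> (1/2)" using Mpos by (simp add: less_divide_eq)
    then show ?thesis using that by (auto simp: e2_def)
  qed
  have CS: "(\<forall>w1\<in>cball c' \<rho>. \<forall>w2\<in>cball c' \<rho>. norm (T \<epsilon> w1 - T \<epsilon> w2) \<le> 1/2 * norm (w1 - w2))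
            \<and> norm (T \<epsilon> c' - c') \<le> \<rho> / 2" if e: "0 < \<epsilon>" "\<epsilon> < e2" for \<epsilon>
  proof -
    have s: "\<epsilon> < e1" "\<epsilon> \<le> 1" "\<epsilon> * M \<le> \<alpha> * c * min \<rho> (1/2)" using small[OF e] by auto
    show ?thesis
      using contr_step[where F=F and \<epsilon>=\<epsilon> and K=K and \<beta>=\<beta> and \<alpha>=\<alpha> and c=c and R=R and \<rho>=\<rho> and M=M, OF apos cpos ac Rpos hol[OF e(1) s(1)] bd[OF e(1) s(1)] \<rho>_def M_def e(1) s(2) s(3)]
      unfolding T_def c'_def by blast
  qed
  have Lip: "norm (T \<epsilon> w1 - T \<epsilon> w2) \<le> 1/2 * norm (w1 - w2)"
    if "0 < \<epsilon>" "\<epsilon> < e2" "w1 \<in> cball c' \<rho>" "w2 \<in> cball c' \<rho>" for \<epsilon> w1 w2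
    using CS[OF that(1,2)] that(3,4) by blast
  have Into: "T \<epsilon> w \<in> cball c' \<rho>" if "0 < \<epsilon>" "\<epsilon> < e2" "w \<in> cball c' \<rho>" for \<epsilon> w
  proof -
    have cc: "c' \<in> cball c' \<rho>" using rhopos by simp
    have "norm (T \<epsilon> w - c') \<le> norm (T \<epsilon> w - T \<epsilon> c') + norm (T \<epsilon> c' - c')" using norm_triangle_ineq[of "T \<epsilon> w - T \<epsilon> c'" "T \<epsilon> c' - c'"] by simp
    also have "\<dots> \<le> 1/2 * norm (w - c') + \<rho> / 2" using Lip[OF that(1,2,3) cc] CS[OF that(1,2)] by linarith
    also have "\<dots> \<le> 1/2 * \<rho> + \<rho> / 2" using that(3) by (simp add: dist_norm norm_minus_commute)
    finally show ?thesis by (simp add: dist_norm norm_minus_commute)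
  qed
  have FP: "\<exists>!w. w \<in> cball c' \<rho> \<and> T \<epsilon> w = w" if "0 < \<epsilon>" "\<epsilon> < e2" for \<epsilon>
  proof -
    have "\<exists>!x\<in>cball c' \<rho>. T \<epsilon> x = x"
    proof (rule Banach_fix[of _ "1/2"])
      show "complete (cball c' \<rho>)" by (simp add: complete_eq_closed)
      show "cball c' \<rho> \<noteq> {}" using rhopos by simp
      show "T \<epsilon> ` cball c' \<rho> \<subseteq> cball c' \<rho>" using Into[OF that] by blast
      show "dist (T \<epsilon> x) (T \<epsilon> y) \<le> 1/2 * dist x y" if "x \<in> cball c' \<rho>" "y \<in> cball c' \<rho>" for x y
        using Lip[OF \<open>0 < \<epsilon>\<close> \<open>\<epsilon> < e2\<close> that] by (simp add: dist_norm)
    qed auto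
    then show ?thesis by blast
  qed
  define W where "W = (\<lambda>\<epsilon>. THE w. w \<in> cball c' \<rho> \<and> T \<epsilon> w = w)"
  have WP: "W \<epsilon> \<in> cball c' \<rho> \<and> T \<epsilon> (W \<epsilon>) = W \<epsilon>" if "0 < \<epsilon>" "\<epsilon> < e2" for \<epsilon>
    unfolding W_def by (rule theI'[OF FP[OF that]])
  have Wball: "W \<epsilon> \<in> ball c' R" if "0 < \<epsilon>" "\<epsilon> < e2" for \<epsilon>
    using WP[OF that] rho_le Rpos by (auto simp: dist_norm)
  have FW: "F (W \<epsilon>) \<epsilon> = 0" if "0 < \<epsilon>" "\<epsilon> < e2" for \<epsilon>
  proof -
    have "W \<epsilon> - F (W \<epsilon>) \<epsilon> / of_real (2*\<alpha>*c) = W \<epsilon>" using WP[OF that] unfolding T_def by simp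
    then have "F (W \<epsilon>) \<epsilon> / of_real (2*\<alpha>*c) = 0" by simp
    then show ?thesis using apos cpos by auto
  qed
  have ReW: "c \<le> Re (W \<epsilon>) + \<rho>" if "0 < \<epsilon>" "\<epsilon> < e2" for \<epsilon>
  proof -
    have "\<bar>Re (W \<epsilon> - c')\<bar> \<le> norm (W \<epsilon> - c')" by (rule abs_Re_le_cmod)
    also have "\<dots> \<le> \<rho>" using WP[OF that] by (simp add: dist_norm norm_minus_commute)
    finally show ?thesis unfolding c'_def by simp
  qed
  define K2 where "K2 = (\<bar>K\<bar> + \<beta>^2 / (4*\<alpha>)) / (\<alpha> * c)"
  have asym: "norm (W \<epsilon> - (of_real c - \<i> * of_real \<epsilon> * of_real \<beta> / of_real (2*\<alpha>))) \<le> K2 * \<epsilon>^2"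
    if e: "0 < \<epsilon>" "\<epsilon> < e2" for \<epsilon>
  proof -
    define w where "w = W \<epsilon>"
    define u where "u = w + \<i> * of_real \<epsilon> * of_real \<beta> / of_real (2*\<alpha>)"
    have e1': "\<epsilon> < e1" using small[OF e] by simp
    have b: "norm (of_real \<alpha> * w^2 + \<i> * of_real \<epsilon> * of_real \<beta> * w - 1) \<le> \<bar>K\<bar> * \<epsilon>^2"
    proof -
      have "norm (F w \<epsilon> - (of_real \<alpha> * w^2 + \<i> * of_real \<epsilon> * of_real \<beta> * w - 1)) \<le> K * \<epsilon>^2"
        using bd[OF e(1) e1'] Wball[OF e] unfolding w_def c'_def by blast
      moreover have "K * \<epsilon>^2 \<le> \<bar>K\<bar> * \<epsilon>^2" by (intro mult_right_mono) auto
      ultimately show ?thesis using FW[OF e] unfolding w_def by (simp add: norm_minus_commute)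
    qed
    have ac': "of_real \<alpha> * c'^2 = (1::complex)" using ac unfolding c'_def by (metis of_real_1 of_real_mult of_real_power)
    have id: "of_real \<alpha> * ((u - c') * (u + c')) = (of_real \<alpha> * w^2 + \<i> * of_real \<epsilon> * of_real \<beta> * w - 1) - of_real (\<epsilon>^2 * \<beta>^2 / (4*\<alpha>))"
    proof -
      have "of_real \<alpha> * ((u - c') * (u + c')) = of_real \<alpha> * u^2 - of_real \<alpha> * c'^2" by (simp add: algebra_simps power2_eq_square)
      also have "\<dots> = of_real \<alpha> * u^2 - 1" using ac' by simp
      also have "of_real \<alpha> * u^2 = of_real \<alpha> * w^2 + \<i> * of_real \<epsilon> * of_real \<beta> * w - of_real (\<epsilon>^2 * \<beta>^2 / (4*\<alpha>))"
        unfolding u_def using apos by (simp add: field_simps power2_eq_square)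
      finally show ?thesis by simp
    qed
    have nuc: "c \<le> norm (u + c')"
    proof -
      have "Re (u + c') = Re w + c" unfolding u_def c'_def using apos by simp
      moreover have "0 < Re w" using ReW[OF e] rho_le cpos unfolding w_def by linarith
      ultimately show ?thesis using complex_Re_le_cmod[of "u + c'"] by linarith
    qed
    have "\<alpha> * (norm (u - c') * norm (u + c')) = norm (of_real \<alpha> * ((u - c') * (u + c')))"
      using apos by (simp add: norm_mult)
    also have "\<dots> \<le> norm (of_real \<alpha> * w^2 + \<i> * of_real \<epsilon> * of_real \<beta> * w - 1) + norm (of_real (\<epsilon>^2 * \<beta>^2 / (4*\<alpha>)) :: complex)"
      unfolding id by (rule norm_triangle_ineq4)
    also have "\<dots> \<le> \<bar>K\<bar> * \<epsilon>^2 + \<epsilon>^2 * \<beta>^2 / (4*\<alpha>)"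
    proof -
      have "0 \<le> \<epsilon>^2 * \<beta>^2 / (4*\<alpha>)" using apos by simp
      then have "norm (of_real (\<epsilon>^2 * \<beta>^2 / (4*\<alpha>)) :: complex) = \<epsilon>^2 * \<beta>^2 / (4*\<alpha>)"
        by (simp only: norm_of_real abs_of_nonneg)
      then show ?thesis using b by linarith
    qed
    finally have "\<alpha> * (norm (u - c') * norm (u + c')) \<le> (\<bar>K\<bar> + \<beta>^2 / (4*\<alpha>)) * \<epsilon>^2" by (simp add: algebra_simps)
    moreover have "\<alpha> * (norm (u - c') * c) \<le> \<alpha> * (norm (u - c') * norm (u + c'))"
      using nuc apos by (intro mult_left_mono) auto
    ultimately have "(\<alpha> * c) * norm (u - c') \<le> (\<bar>K\<bar> + \<beta>^2 / (4*\<alpha>)) * \<epsilon>^2" by (simp add: algebra_simps)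
    then have "norm (u - c') \<le> (\<bar>K\<bar> + \<beta>^2 / (4*\<alpha>)) * \<epsilon>^2 / (\<alpha> * c)" using acpos by (simp add: le_divide_eq mult.commute)
    also have "\<dots> = K2 * \<epsilon>^2" by (simp add: K2_def)
    also have "u - c' = W \<epsilon> - (of_real c - \<i> * of_real \<epsilon> * of_real \<beta> / of_real (2*\<alpha>))"
      unfolding u_def w_def c'_def by simp
    finally show ?thesis .
  qed
  have contW: "continuous_on {0<..<e2} W"
    unfolding continuous_on_iff
  proof (intro ballI allI impI)
    fix x \<eta> :: real assume x: "x \<in> {0<..<e2}" and eta: "0 < \<eta>"
    have x': "0 < x" "x < e2" using x by auto
    have "continuous_on {0<..<e1} (F (W x))" using cont Wball[OF x'] unfolding c'_def by blast
    moreover have "x \<in> {0<..<e1}" using small[OF x'] x' by auto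
    moreover have "0 < \<eta> * (\<alpha> * c)" using eta acpos by simp
    ultimately obtain d where d: "0 < d" and hd: "\<And>x'. x' \<in> {0<..<e1} \<Longrightarrow> dist x' x < d \<Longrightarrow> dist (F (W x) x') (F (W x) x) < \<eta> * (\<alpha> * c)"
      unfolding continuous_on_iff by metis
    show "\<exists>d>0. \<forall>x'\<in>{0<..<e2}. dist x' x < d \<longrightarrow> dist (W x') (W x) < \<eta>"
    proof (intro exI[of _ d] conjI ballI impI d)
      fix x' assume x'1: "x' \<in> {0<..<e2}" and x'2: "dist x' x < d"
      have y: "0 < x'" "x' < e2" using x'1 by auto
      have "x' \<in> {0<..<e1}" using small[OF y] y by auto
      then have h: "norm (F (W x) x' - F (W x) x) < \<eta> * (\<alpha> * c)" using hd x'2 by (simp add: dist_norm)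
      have dT: "norm (T x' (W x) - T x (W x)) < \<eta> / 2"
      proof -
        have "T x' (W x) - T x (W x) = - ((F (W x) x' - F (W x) x) / of_real (2*\<alpha>*c))"
          unfolding T_def by (simp add: diff_divide_distrib)
        then have "norm (T x' (W x) - T x (W x)) = norm (F (W x) x' - F (W x) x) / \<bar>2*\<alpha>*c\<bar>"
          by (simp only: norm_minus_cancel norm_divide norm_of_real)
        also have "\<dots> < \<eta> * (\<alpha> * c) / (2*\<alpha>*c)"
        proof -
          have "\<bar>2*\<alpha>*c\<bar> = 2*\<alpha>*c" using acpos by simp
          moreover have "0 < 2*\<alpha>*c" using acpos by simp
          ultimately show ?thesis using divide_strict_right_mono[OF h, of "2*\<alpha>*c"] by simp
        qed
        also have "\<dots> = \<eta> / 2" using apos cpos by (simp add: field_simps)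
        finally show ?thesis .
      qed
      have "W x' - W x = (T x' (W x') - T x' (W x)) + (T x' (W x) - T x (W x))"
        using WP[OF y] WP[OF x'] by simp
      then have "norm (W x' - W x) \<le> norm (T x' (W x') - T x' (W x)) + norm (T x' (W x) - T x (W x))"
        by (metis norm_triangle_ineq)
      also have "\<dots> \<le> 1/2 * norm (W x' - W x) + norm (T x' (W x) - T x (W x))"
      proof -
        have "norm (T x' (W x') - T x' (W x)) \<le> 1/2 * norm (W x' - W x)"
          by (rule Lip[OF y]) (use WP[OF y] WP[OF x'] in auto)
        then show ?thesis by linarith
      qed
      finally have "norm (W x' - W x) < \<eta>" using dT by linarith
      then show "dist (W x') (W x) < \<eta>" by (simp add: dist_norm)
    qed
  qed
  have all: "\<forall>\<epsilon>\<in>{0<..<e2}. 0 < Re (W \<epsilon>) \<and> F (W \<epsilon>) \<epsilon> = 0 \<and> norm (W \<epsilon> - (of_real c - \<i> * of_real \<epsilon> * of_real \<beta> / of_real (2*\<alpha>))) \<le> K2 * \<epsilon>^2"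
  proof
    fix \<epsilon> assume "\<epsilon> \<in> {0<..<e2}"
    then have e: "0 < \<epsilon>" "\<epsilon> < e2" by auto
    show "0 < Re (W \<epsilon>) \<and> F (W \<epsilon>) \<epsilon> = 0 \<and> norm (W \<epsilon> - (of_real c - \<i> * of_real \<epsilon> * of_real \<beta> / of_real (2*\<alpha>))) \<le> K2 * \<epsilon>^2"
      using ReW[OF e] rho_le cpos FW[OF e] asym[OF e] by auto
  qed
  show ?thesis using all e2pos contW by blast
qed


lemma assemble:
  fixes F :: "complex \<Rightarrow> real \<Rightarrow> complex" and D :: "complex \<Rightarrow> real \<Rightarrow> complex"
    and \<alpha> \<beta> c R ee K cc :: real
  assumes apos: "0 < \<alpha>" and cpos: "0 < c" and ac: "\<alpha> * c^2 = 1" and Rpos: "0 < R" and eepos: "0 < ee"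
    and hol: "\<And>\<epsilon>. 0 < \<epsilon> \<Longrightarrow> \<epsilon> < ee \<Longrightarrow> (\<lambda>w. F w \<epsilon>) holomorphic_on ball (of_real c) R"
    and bd: "\<And>\<epsilon> w. 0 < \<epsilon> \<Longrightarrow> \<epsilon> < ee \<Longrightarrow> w \<in> ball (of_real c) R \<Longrightarrow>
               norm (F w \<epsilon> - (of_real \<alpha> * w^2 + \<i> * of_real \<epsilon> * of_real \<beta> * w - 1)) \<le> K * \<epsilon>^2"
    and cont: "\<And>w. w \<in> ball (of_real c) R \<Longrightarrow> continuous_on {0<..<ee} (F w)"
    and detrel: "\<And>\<epsilon> w. 0 < \<epsilon> \<Longrightarrow> w \<noteq> 0 \<Longrightarrow> F w \<epsilon> = 0 \<Longrightarrow> D (of_real \<epsilon> * w) (\<epsilon>^2) = 0"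
    and cc: "cc = \<beta> / (2 * \<alpha>)"
  shows "\<exists>\<delta>0 > 0. \<exists>\<omega> :: real \<Rightarrow> complex.
         continuous_on {0<..<\<delta>0} \<omega> \<and>
         (\<forall>\<delta> \<in> {0<..<\<delta>0}. Re (\<omega> \<delta>) > 0 \<and> D (\<omega> \<delta>) \<delta> = 0) \<and>
         (\<lambda>\<delta>. \<omega> \<delta> - (of_real (c * \<delta> powr (1/2)) - \<i> * of_real (cc * \<delta>)))
           \<in> O[at_right 0](\<lambda>\<delta>. of_real (\<delta> powr (3/2)))"
proof -
  obtain e2 K2 W where e2: "0 < e2" and contW: "continuous_on {0<..<e2} W"
    and WP: "\<And>\<epsilon>. \<epsilon> \<in> {0<..<e2} \<Longrightarrow> 0 < Re (W \<epsilon>) \<and> F (W \<epsilon>) \<epsilon> = 0 \<and>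
              norm (W \<epsilon> - (of_real c - \<i> * of_real \<epsilon> * of_real \<beta> / of_real (2*\<alpha>))) \<le> K2 * \<epsilon>^2"
    using root_lemma[OF apos cpos ac Rpos eepos hol bd cont] by blast
  define \<delta>0 where "\<delta>0 = e2^2"
  define \<omega> where "\<omega> = (\<lambda>\<delta>. of_real (sqrt \<delta>) * W (sqrt \<delta>))"
  have d0: "0 < \<delta>0" using e2 by (simp add: \<delta>0_def)
  have sq: "sqrt \<delta> \<in> {0<..<e2}" if "\<delta> \<in> {0<..<\<delta>0}" for \<delta>
  proof -
    have "sqrt \<delta> < sqrt (e2^2)" using that by (simp add: \<delta>0_def del: real_sqrt_abs)
    then show ?thesis using that e2 by simp
  qed
  have contom: "continuous_on {0<..<\<delta>0} \<omega>"
    unfolding \<omega>_def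
    by (intro continuous_intros continuous_on_compose2[OF contW continuous_on_real_sqrt]) (use sq in auto)
  have propW: "Re (\<omega> \<delta>) > 0 \<and> D (\<omega> \<delta>) \<delta> = 0" if d: "\<delta> \<in> {0<..<\<delta>0}" for \<delta>
  proof -
    define s where "s = sqrt \<delta>"
    have s: "s \<in> {0<..<e2}" using sq[OF d] by (simp add: s_def)
    have W: "0 < Re (W s)" "F (W s) s = 0" using WP[OF s] by auto
    have W0: "W s \<noteq> 0" using W(1) by auto
    have "Re (\<omega> \<delta>) = s * Re (W s)" by (simp add: \<omega>_def s_def)
    moreover have "0 < s * Re (W s)" using s W by simp
    moreover have "D (\<omega> \<delta>) \<delta> = D (of_real s * W s) (s^2)" using d by (simp add: \<omega>_def s_def)
    moreover have "D (of_real s * W s) (s^2) = 0" using detrel[OF _ W0 W(2)] s by simp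
    ultimately show ?thesis by simp
  qed
  have big: "(\<lambda>\<delta>. \<omega> \<delta> - (of_real (c * \<delta> powr (1/2)) - \<i> * of_real (cc * \<delta>))) \<in> O[at_right 0](\<lambda>\<delta>. of_real (\<delta> powr (3/2)))"
  proof (rule bigoI[of _ K2])
    show "\<forall>\<^sub>F \<delta> in at_right 0. norm (\<omega> \<delta> - (of_real (c * \<delta> powr (1/2)) - \<i> * of_real (cc * \<delta>))) \<le> K2 * norm (of_real (\<delta> powr (3/2)) :: complex)"
      unfolding eventually_at_right_field
    proof (intro exI[of _ \<delta>0] conjI allI impI d0)
      fix \<delta> :: real assume d: "0 < \<delta>" "\<delta> < \<delta>0"
      define s where "s = sqrt \<delta>"
      have s: "s \<in> {0<..<e2}" using sq[of \<delta>] d by (simp add: s_def)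
      have s0: "0 < s" using s by simp
      have p12: "\<delta> powr (1/2) = s" using d by (simp add: s_def powr_half_sqrt)
      have ds0: "\<delta> = s * s" using d by (simp add: s_def)
      have p32: "\<delta> powr (3/2) = s^3"
      proof -
        have "\<delta> powr (3/2) = \<delta> powr (1 + 1/2)" by simp
        also have "\<dots> = \<delta> powr 1 * \<delta> powr (1/2)" by (rule powr_add)
        also have "\<dots> = \<delta> * s" using d by (simp add: powr_half_sqrt s_def)
        also have "\<dots> = s^3" unfolding ds0 by (simp add: power3_eq_cube)
        finally show ?thesis .
      qed
      have ds: "\<delta> = s^2" using d by (simp add: s_def)
      have eq: "\<omega> \<delta> - (of_real (c * \<delta> powr (1/2)) - \<i> * of_real (cc * \<delta>))
          = of_real s * (W s - (of_real c - \<i> * of_real s * of_real \<beta> / of_real (2*\<alpha>)))"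
        unfolding p12 cc \<omega>_def s_def[symmetric] using apos ds by (simp add: field_simps power2_eq_square)
      have "norm (\<omega> \<delta> - (of_real (c * \<delta> powr (1/2)) - \<i> * of_real (cc * \<delta>))) = s * norm (W s - (of_real c - \<i> * of_real s * of_real \<beta> / of_real (2*\<alpha>)))"
        unfolding eq using s0 by (simp add: norm_mult)
      also have "\<dots> \<le> s * (K2 * s^2)" using WP[OF s] s0 by (intro mult_left_mono) auto
      also have "\<dots> = K2 * norm (of_real (\<delta> powr (3/2)) :: complex)"
      proof -
        have "norm (of_real (\<delta> powr (3/2)) :: complex) = \<bar>\<delta> powr (3/2)\<bar>" by (rule norm_of_real)
        also have "\<dots> = s^3" unfolding p32 using s0 by simp
        finally have "norm (of_real (\<delta> powr (3/2)) :: complex) = s^3" .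
        then show ?thesis by (simp only: power2_eq_square power3_eq_cube mult_ac)
      qed
      finally show "norm (\<omega> \<delta> - (of_real (c * \<delta> powr (1/2)) - \<i> * of_real (cc * \<delta>))) \<le> K2 * norm (of_real (\<delta> powr (3/2)) :: complex)" .
    qed
  qed
  show ?thesis using d0 contom propW big by blast
qed




lemma sph_j_fun: "sph_j = (\<lambda>t. sin t / t)" by (rule ext) (simp add: sph_j_def)
lemma sph_h_fun: "sph_h = (\<lambda>t. - \<i> * exp (\<i> * t) / t)" by (rule ext) (simp add: sph_h_def)

lemma deriv_sph_j: "t \<noteq> 0 \<Longrightarrow> deriv sph_j t = (t * cos t - sin t) / t^2"
proof -
  assume t: "t \<noteq> 0"
  have "(sph_j has_field_derivative ((t * cos t - sin t) / t^2)) (at t)"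
    unfolding sph_j_fun using t by (auto intro!: derivative_eq_intros simp: field_simps power2_eq_square)
  then show ?thesis by (rule DERIV_imp_deriv)
qed

lemma deriv_sph_h: "t \<noteq> 0 \<Longrightarrow> deriv sph_h t = exp (\<i> * t) * (t + \<i>) / t^2"
proof -
  assume t: "t \<noteq> 0"
  have "(sph_h has_field_derivative (exp (\<i> * t) * (t + \<i>) / t^2)) (at t)"
    unfolding sph_h_fun using t by (auto intro!: derivative_eq_intros simp: field_simps power2_eq_square)
  then show ?thesis by (rule DERIV_imp_deriv)
qed

lemma det_mat_Suc: "det (mat (Suc n) (Suc n) f) =
  (\<Sum>i<Suc n. f (i,0) * ((-1)^i * det (mat n n (\<lambda>(a,b). f (if a < i then a else Suc a, Suc b)))))"
proof -
  have "det (mat (Suc n) (Suc n) f) = (\<Sum>i<Suc n. mat (Suc n) (Suc n) f $$ (i,0) * cofactor (mat (Suc n) (Suc n) f) i 0)"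
    by (rule laplace_expansion_column) auto
  also have "\<dots> = (\<Sum>i<Suc n. f (i,0) * ((-1)^i * det (mat n n (\<lambda>(a,b). f (if a < i then a else Suc a, Suc b)))))"
  proof (rule sum.cong[OF refl])
    fix i assume i: "i \<in> {..<Suc n}"
    have "mat_delete (mat (Suc n) (Suc n) f) i 0 = mat n n (\<lambda>(a,b). f (if a < i then a else Suc a, Suc b))"
      by (rule eq_matI) (auto simp: mat_delete_def)
    then show "mat (Suc n) (Suc n) f $$ (i,0) * cofactor (mat (Suc n) (Suc n) f) i 0 = f (i,0) * ((-1)^i * det (mat n n (\<lambda>(a,b). f (if a < i then a else Suc a, Suc b))))"
      using i unfolding cofactor_def by simp
  qed
  finally show ?thesis .
qed

lemma det_mat_1: "det (mat 1 1 f) = f (0,0)"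
  using det_mat_Suc[of 0 f] by (simp add: det_dim_zero[of "mat 0 0 _"])

lemma det_mat_1': "det (mat (Suc 0) (Suc 0) f) = f (0,0)"
  using det_mat_1 by simp

lemma det_mat_2: "det (mat 2 2 f) = f (0,0) * f (1,1) - f (1,0) * f (0,1)"
  using det_mat_Suc[of 1 f] by (simp add: det_mat_1' numeral_2_eq_2)

lemma blockM_00: "blockM ko co ki ci r 0 0 = - sph_h (ko * of_real r)" by (simp add: blockM_def)
lemma blockM_01: "blockM ko co ki ci r 0 1 = sph_j (ki * of_real r)" by (simp add: blockM_def)
lemma blockM_10: "blockM ko co ki ci r 1 0 = - co * deriv sph_h (ko * of_real r)" by (simp add: blockM_def)
lemma blockM_11: "blockM ko co ki ci r 1 1 = ci * deriv sph_j (ki * of_real r)" by (simp add: blockM_def)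
lemma blockR_00: "blockR ko co ki ci r 0 0 = sph_h (ki * of_real r)" by (simp add: blockR_def)
lemma blockR_10: "blockR ko co ki ci r 1 0 = ci * deriv sph_h (ki * of_real r)" by (simp add: blockR_def)
lemma blockR_01: "blockR ko co ki ci r a 1 = 0" by (simp add: blockR_def)
lemma blockL_01: "blockL ko co ki ci r 0 1 = - sph_j (ko * of_real r)" by (simp add: blockL_def)
lemma blockL_11: "blockL ko co ki ci r 1 1 = - co * deriv sph_j (ko * of_real r)" by (simp add: blockL_def)
lemma blockL_00: "blockL ko co ki ci r a 0 = 0" by (simp add: blockL_def)

lemma id1:
  fixes x y e t d E :: complex
  assumes "x \<noteq> 0" "y \<noteq> 0" "e \<noteq> 0" "x = t * y" "d = e^2"
  shows "- (- \<i> * E / y) * (t * ((x * cos x - sin x) / x^2)) - (- d * (E * (y + \<i>) / y^2)) * (sin x / x)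
     = - \<i> * e^2 * E / y^2 * ((x / e)^2 * ((sin x - x * cos x) / x^3) - (1 - \<i> * y) * (sin x / x))"
  using assms by (simp add: field_simps power2_eq_square power3_eq_cube)

lemma det1_eq:
  fixes v vr \<epsilon> :: real and w :: complex and r :: "nat \<Rightarrow> real"
  assumes "0 < v" "0 < vr" "0 < r 1" "0 < \<epsilon>" "w \<noteq> 0"
  shows "det (transmission_matrix 1 r v vr (of_real \<epsilon> * w) (\<epsilon>^2)) =
    - \<i> * of_real \<epsilon>^2 * exp (\<i> * (of_real \<epsilon> * of_real (r 1 / v) * w)) / (of_real \<epsilon> * of_real (r 1 / v) * w)^2 * G1 (r 1 / vr) (r 1 / v) w \<epsilon>"
proof -
  define x where "x = of_real \<epsilon> * of_real (r 1 / vr) * w"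
  define y where "y = of_real \<epsilon> * of_real (r 1 / v) * w"
  have x0: "x \<noteq> 0" and y0: "y \<noteq> 0" using assms by (auto simp: x_def y_def)
  have ex: "of_real \<epsilon> * w / of_real vr * of_real (r 1) = x" using assms by (simp add: x_def field_simps)
  have ey: "of_real \<epsilon> * w / of_real v * of_real (r 1) = y" using assms by (simp add: y_def field_simps)
  have xt: "x = of_real (v / vr) * y" using assms by (simp add: x_def y_def field_simps)
  have M: "transmission_matrix 1 r v vr (of_real \<epsilon> * w) (\<epsilon>^2) = mat 2 2 (\<lambda>(p,q). blockM (of_real \<epsilon> * w / of_real v) (of_real (\<epsilon>^2)) (of_real \<epsilon> * w / of_real vr) (of_real (v/vr)) (r 1) p q)"
    unfolding transmission_matrix_def Let_def by (rule eq_matI) auto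
  have "det (transmission_matrix 1 r v vr (of_real \<epsilon> * w) (\<epsilon>^2)) =
     - (- \<i> * exp (\<i> * y) / y) * (of_real (v / vr) * ((x * cos x - sin x) / x^2)) - (- of_real (\<epsilon>^2) * (exp (\<i> * y) * (y + \<i>) / y^2)) * (sin x / x)"
    unfolding M det_mat_2 prod.case blockM_00 blockM_01 blockM_10 blockM_11 ex ey sph_h_def sph_j_def deriv_sph_j[OF x0] deriv_sph_h[OF y0]
    by simp
  also have "\<dots> = - \<i> * of_real \<epsilon>^2 * exp (\<i> * y) / y^2 * ((x / of_real \<epsilon>)^2 * ((sin x - x * cos x) / x^3) - (1 - \<i> * y) * (sin x / x))"
    by (rule id1) (use x0 y0 xt assms in auto)
  also have "\<dots> = - \<i> * of_real \<epsilon>^2 * exp (\<i> * y) / y^2 * G1 (r 1 / vr) (r 1 / v) w \<epsilon>"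
    using assms unfolding G1_def pf_def sincf_def x_def y_def by (simp add: field_simps)
  finally show ?thesis unfolding y_def .
qed



lemma det4_sparse:
  assumes "g (2,0) = 0" "g (3,0) = 0" "g (0,3) = 0" "g (1,3) = 0"
  shows "det (mat 4 4 g) = g (0,0) * (g (1,1) * (g (2,2) * g (3,3) - g (2,3) * g (3,2)) - g (1,2) * (g (2,1) * g (3,3) - g (2,3) * g (3,1)))
       - g (1,0) * (g (0,1) * (g (2,2) * g (3,3) - g (2,3) * g (3,2)) - g (0,2) * (g (2,1) * g (3,3) - g (2,3) * g (3,1)))"
  using assms by (simp add: det_mat_Suc det_mat_1' eval_nat_numeral algebra_simps)


lemma id2:
  fixes x1 x2 y1 y2 t e d E s1 c1 s2 c2 sy cy A B C D :: complex
  assumes nz: "t \<noteq> 0" "e \<noteq> 0" "C \<noteq> 0" "D \<noteq> 0"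
    and rel: "x1 = t * y1" "x2 = t * y2" "y1 = e * C" "y2 = e * D" "A = t * C" "B = t * D" "d = e^2"
  defines "g00 \<equiv> - (- \<i> * E / y1)" and "g01 \<equiv> s1 / x1" and "g02 \<equiv> - \<i> * (c1 + \<i> * s1) / x1"
    and "g10 \<equiv> - d * (E * (y1 + \<i>) / y1^2)" and "g11 \<equiv> t * ((x1 * c1 - s1) / x1^2)"
    and "g12 \<equiv> t * ((c1 + \<i> * s1) * (x1 + \<i>) / x1^2)"
    and "g21 \<equiv> - (s2 / x2)" and "g22 \<equiv> - (- \<i> * (c2 + \<i> * s2) / x2)" and "g23 \<equiv> sy / y2"
    and "g31 \<equiv> - t * ((x2 * c2 - s2) / x2^2)" and "g32 \<equiv> - t * ((c2 + \<i> * s2) * (x2 + \<i>) / x2^2)"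
    and "g33 \<equiv> d * ((y2 * cy - sy) / y2^2)"
  shows "g00 * (g11 * (g22 * g33 - g23 * g32) - g12 * (g21 * g33 - g23 * g31))
       - g10 * (g01 * (g22 * g33 - g23 * g32) - g02 * (g21 * g33 - g23 * g31))
     = E * t * e^2 / (x2^2 * y1^2) *
       (A^2 * ((s1 - x1 * c1) / x1^3) * (sy / y2 * (c2 + x2 * s2) - e^4 * B^2 * c2 * ((sy - y2 * cy) / y2^3) / t^2)
        - (c1 + x1 * s1) * (B^3 * (sy / y2) * ((s2 - x2 * c2) / x2^3) - e^2 * B^2 * D * (s2 / x2) * ((sy - y2 * cy) / y2^3) / t) / A
        - (1 - \<i> * e * C) * (s1 / x1 * (sy / y2 * (c2 + x2 * s2) - e^4 * B^2 * c2 * ((sy - y2 * cy) / y2^3) / t^2)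
             - e^2 * c1 * (B^3 * (sy / y2) * ((s2 - x2 * c2) / x2^3) - e^2 * B^2 * D * (s2 / x2) * ((sy - y2 * cy) / y2^3) / t) / A))"
proof -
  have nz2: "x1 \<noteq> 0" "x2 \<noteq> 0" "y1 \<noteq> 0" "y2 \<noteq> 0" using nz rel by auto
  define Y02 where "Y02 = c1 / x1"
  define Y12 where "Y12 = t * (- (x1 * s1 + c1) / x1^2)"
  define Y22 where "Y22 = - (c2 / x2)"
  define Y32 where "Y32 = - t * (- (x2 * s2 + c2) / x2^2)"
  have c02: "g02 = g01 - \<i> * Y02" using nz2 unfolding g02_def g01_def Y02_def by (simp add: field_simps)
  have c12: "g12 = g11 - \<i> * Y12" using nz2 unfolding g12_def g11_def Y12_def by (simp add: field_simps algebra_simps power2_eq_square)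
  have c22: "g22 = g21 - \<i> * Y22" using nz2 unfolding g22_def g21_def Y22_def by (simp add: field_simps)
  have c32: "g32 = g31 - \<i> * Y32" using nz2 unfolding g32_def g31_def Y32_def by (simp add: field_simps algebra_simps power2_eq_square)
  have step: "g00 * (g11 * (g22 * g33 - g23 * g32) - g12 * (g21 * g33 - g23 * g31))
       - g10 * (g01 * (g22 * g33 - g23 * g32) - g02 * (g21 * g33 - g23 * g31))
     = (- \<i> * g00) * (g11 * (Y22 * g33 - g23 * Y32) - Y12 * (g21 * g33 - g23 * g31))
       - (- \<i> * g10) * (g01 * (Y22 * g33 - g23 * Y32) - Y02 * (g21 * g33 - g23 * g31))"
    unfolding c02 c12 c22 c32 by (simp add: algebra_simps)
  have i00: "- \<i> * g00 = E / y1" unfolding g00_def by simp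
  have i10: "- \<i> * g10 = d * E * (\<i> * y1 - 1) / y1^2" unfolding g10_def by (simp add: field_simps algebra_simps)
  define p1 where "p1 = (s1 - x1 * c1) / x1^3"
  define q1 where "q1 = c1 + x1 * s1"
  define sinc1 where "sinc1 = s1 / x1"
  define WY where "WY = sy / y2 * (c2 + x2 * s2) - e^4 * B^2 * c2 * ((sy - y2 * cy) / y2^3) / t^2"
  define V where "V = B^3 * (sy / y2) * ((s2 - x2 * c2) / x2^3) - e^2 * B^2 * D * (s2 / x2) * ((sy - y2 * cy) / y2^3) / t"
  have WYeq: "Y22 * g33 - g23 * Y32 = - (t / x2^2) * WY"
    using nz nz2 unfolding Y22_def g33_def g23_def Y32_def WY_def rel(7) rel(2) rel(4) rel(6)
    by (simp add: field_simps eval_nat_numeral)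
  have WJeq: "g21 * g33 - g23 * g31 = - (t * e^3 / x2^2) * V"
    using nz nz2 unfolding g21_def g33_def g23_def g31_def V_def rel(7) rel(2) rel(4) rel(6)
    by (simp add: field_simps eval_nat_numeral)
  have g11eq: "g11 = - t * x1 * p1" using nz2 unfolding g11_def p1_def by (simp add: field_simps power2_eq_square power3_eq_cube)
  have Y12eq: "Y12 = - t * q1 / x1^2" unfolding Y12_def q1_def by (simp add: field_simps)
  have g01eq: "g01 = sinc1" unfolding g01_def sinc1_def ..
  have fin: "(E / y1) * ((- t * x1 * p1) * (- (t / x2^2) * WY) - (- t * q1 / x1^2) * (- (t * e^3 / x2^2) * V))
      - (d * E * (\<i> * y1 - 1) / y1^2) * (sinc1 * (- (t / x2^2) * WY) - (c1 / x1) * (- (t * e^3 / x2^2) * V))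
     = E * t * e^2 / (x2^2 * y1^2) * (A^2 * p1 * WY - q1 * V / A - (1 - \<i> * e * C) * (sinc1 * WY - e^2 * c1 * V / A))"
    using nz nz2 unfolding rel(1) rel(3) rel(5) rel(7) by (simp add: field_simps eval_nat_numeral)
  have "(- \<i> * g00) * (g11 * (Y22 * g33 - g23 * Y32) - Y12 * (g21 * g33 - g23 * g31))
       - (- \<i> * g10) * (g01 * (Y22 * g33 - g23 * Y32) - Y02 * (g21 * g33 - g23 * g31))
     = E * t * e^2 / (x2^2 * y1^2) * (A^2 * p1 * WY - q1 * V / A - (1 - \<i> * e * C) * (sinc1 * WY - e^2 * c1 * V / A))"
    unfolding i00 i10 WYeq WJeq g11eq Y12eq g01eq Y02_def by (rule fin)
  then show ?thesis unfolding step[symmetric] p1_def q1_def sinc1_def WY_def V_def .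
qed

lemma less4_cases: "(i::nat) < 4 \<Longrightarrow> i = 0 \<or> i = 1 \<or> i = 2 \<or> i = 3" by auto

definition tm2f :: "(nat \<Rightarrow> real) \<Rightarrow> real \<Rightarrow> real \<Rightarrow> complex \<Rightarrow> real \<Rightarrow> nat \<times> nat \<Rightarrow> complex" where
  "tm2f r v vr \<omega> \<delta> = (\<lambda>(p,q).
     if p < 2 then (if q < 2 then blockM (\<omega> / of_real v) (of_real \<delta>) (\<omega> / of_real vr) (of_real (v/vr)) (r 1) p q
                    else blockR (\<omega> / of_real v) (of_real \<delta>) (\<omega> / of_real vr) (of_real (v/vr)) (r 1) p (q - 2))
     else (if q < 2 then blockL (\<omega> / of_real vr) (of_real (v/vr)) (\<omega> / of_real v) (of_real \<delta>) (r 2) (p - 2) q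
           else blockM (\<omega> / of_real vr) (of_real (v/vr)) (\<omega> / of_real v) (of_real \<delta>) (r 2) (p - 2) (q - 2)))"

lemma tm2_eq: "transmission_matrix 2 r v vr \<omega> \<delta> = mat 4 4 (tm2f r v vr \<omega> \<delta>)"
  unfolding transmission_matrix_def Let_def tm2f_def
  apply (rule eq_matI)
  subgoal for i j
    apply (subgoal_tac "i < 4 \<and> j < 4")
     apply (elim conjE)
     apply (drule less4_cases)+
     apply (elim disjE)
                    apply (simp_all add: tm2f_def numeral_2_eq_2[symmetric])
    done
  by auto


lemma tm2f_00: "tm2f r v vr \<omega> \<delta> (0,0) = - sph_h (\<omega> / of_real v * of_real (r 1))" by (simp add: tm2f_def blockM_def)
lemma tm2f_01: "tm2f r v vr \<omega> \<delta> (0,1) = sph_j (\<omega> / of_real vr * of_real (r 1))" by (simp add: tm2f_def blockM_def)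
lemma tm2f_02: "tm2f r v vr \<omega> \<delta> (0,2) = sph_h (\<omega> / of_real vr * of_real (r 1))" by (simp add: tm2f_def blockR_def)
lemma tm2f_03: "tm2f r v vr \<omega> \<delta> (0,3) = 0" by (simp add: tm2f_def blockR_def)
lemma tm2f_10: "tm2f r v vr \<omega> \<delta> (1,0) = - of_real \<delta> * deriv sph_h (\<omega> / of_real v * of_real (r 1))" by (simp add: tm2f_def blockM_def)
lemma tm2f_11: "tm2f r v vr \<omega> \<delta> (1,1) = of_real (v/vr) * deriv sph_j (\<omega> / of_real vr * of_real (r 1))" by (simp add: tm2f_def blockM_def)
lemma tm2f_12: "tm2f r v vr \<omega> \<delta> (1,2) = of_real (v/vr) * deriv sph_h (\<omega> / of_real vr * of_real (r 1))" by (simp add: tm2f_def blockR_def)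
lemma tm2f_13: "tm2f r v vr \<omega> \<delta> (1,3) = 0" by (simp add: tm2f_def blockR_def)
lemma tm2f_20: "tm2f r v vr \<omega> \<delta> (2,0) = 0" by (simp add: tm2f_def blockL_def)
lemma tm2f_21: "tm2f r v vr \<omega> \<delta> (2,1) = - sph_j (\<omega> / of_real vr * of_real (r 2))" by (simp add: tm2f_def blockL_def)
lemma tm2f_22: "tm2f r v vr \<omega> \<delta> (2,2) = - sph_h (\<omega> / of_real vr * of_real (r 2))" by (simp add: tm2f_def blockM_def)
lemma tm2f_23: "tm2f r v vr \<omega> \<delta> (2,3) = sph_j (\<omega> / of_real v * of_real (r 2))" by (simp add: tm2f_def blockM_def)
lemma tm2f_30: "tm2f r v vr \<omega> \<delta> (3,0) = 0" by (simp add: tm2f_def blockL_def)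
lemma tm2f_31: "tm2f r v vr \<omega> \<delta> (3,1) = - of_real (v/vr) * deriv sph_j (\<omega> / of_real vr * of_real (r 2))" by (simp add: tm2f_def blockL_def)
lemma tm2f_32: "tm2f r v vr \<omega> \<delta> (3,2) = - of_real (v/vr) * deriv sph_h (\<omega> / of_real vr * of_real (r 2))" by (simp add: tm2f_def blockM_def)
lemma tm2f_33: "tm2f r v vr \<omega> \<delta> (3,3) = of_real \<delta> * deriv sph_j (\<omega> / of_real v * of_real (r 2))" by (simp add: tm2f_def blockM_def)

lemma det2_eq:
  fixes v vr \<epsilon> :: real and w :: complex and r :: "nat \<Rightarrow> real"
  assumes "0 < v" "0 < vr" "0 < r 2" "0 < r 1" "0 < \<epsilon>" "w \<noteq> 0"
  shows "det (transmission_matrix 2 r v vr (of_real \<epsilon> * w) (\<epsilon>^2)) =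
    exp (\<i> * (of_real \<epsilon> * of_real (r 1 / v) * w)) * of_real (v / vr) * of_real \<epsilon>^2
      / ((of_real \<epsilon> * of_real (r 2 / vr) * w)^2 * (of_real \<epsilon> * of_real (r 1 / v) * w)^2)
      * G2 (r 1 / vr) (r 2 / vr) (r 1 / v) (r 2 / v) (v / vr) w \<epsilon>"
proof -
  define x1 where "x1 = of_real \<epsilon> * of_real (r 1 / vr) * w"
  define x2 where "x2 = of_real \<epsilon> * of_real (r 2 / vr) * w"
  define y1 where "y1 = of_real \<epsilon> * of_real (r 1 / v) * w"
  define y2 where "y2 = of_real \<epsilon> * of_real (r 2 / v) * w"
  have x10: "x1 \<noteq> 0" and y10: "y1 \<noteq> 0" and x20: "x2 \<noteq> 0" and y20: "y2 \<noteq> 0"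
    using assms by (auto simp: x1_def y1_def x2_def y2_def)
  have ex1: "of_real \<epsilon> * w / of_real vr * of_real (r 1) = x1" using assms by (simp add: x1_def field_simps)
  have ex2: "of_real \<epsilon> * w / of_real vr * of_real (r 2) = x2" using assms by (simp add: x2_def field_simps)
  have ey1: "of_real \<epsilon> * w / of_real v * of_real (r 1) = y1" using assms by (simp add: y1_def field_simps)
  have ey2: "of_real \<epsilon> * w / of_real v * of_real (r 2) = y2" using assms by (simp add: y2_def field_simps)
  have "det (transmission_matrix 2 r v vr (of_real \<epsilon> * w) (\<epsilon>^2)) =
      - (- \<i> * exp (\<i> * y1) / y1) * (of_real (v/vr) * ((x1 * cos x1 - sin x1) / x1^2) * (- (- \<i> * (cos x2 + \<i> * sin x2) / x2) * (of_real (\<epsilon>^2) * ((y2 * cos y2 - sin y2) / y2^2)) - sin y2 / y2 * (- of_real (v/vr) * ((cos x2 + \<i> * sin x2) * (x2 + \<i>) / x2^2)))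
          - of_real (v/vr) * ((cos x1 + \<i> * sin x1) * (x1 + \<i>) / x1^2) * (- (sin x2 / x2) * (of_real (\<epsilon>^2) * ((y2 * cos y2 - sin y2) / y2^2)) - sin y2 / y2 * (- of_real (v/vr) * ((x2 * cos x2 - sin x2) / x2^2))))
      - (- of_real (\<epsilon>^2) * (exp (\<i> * y1) * (y1 + \<i>) / y1^2)) * (sin x1 / x1 * (- (- \<i> * (cos x2 + \<i> * sin x2) / x2) * (of_real (\<epsilon>^2) * ((y2 * cos y2 - sin y2) / y2^2)) - sin y2 / y2 * (- of_real (v/vr) * ((cos x2 + \<i> * sin x2) * (x2 + \<i>) / x2^2)))
          - (- \<i> * (cos x1 + \<i> * sin x1) / x1) * (- (sin x2 / x2) * (of_real (\<epsilon>^2) * ((y2 * cos y2 - sin y2) / y2^2)) - sin y2 / y2 * (- of_real (v/vr) * ((x2 * cos x2 - sin x2) / x2^2))))"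
    unfolding tm2_eq
    unfolding det4_sparse[of "tm2f r v vr (of_real \<epsilon> * w) (\<epsilon>^2)", OF tm2f_20 tm2f_30 tm2f_03 tm2f_13]
    unfolding tm2f_00 tm2f_01 tm2f_02 tm2f_10 tm2f_11 tm2f_12 tm2f_21 tm2f_22 tm2f_23 tm2f_31 tm2f_32 tm2f_33
    unfolding ex1 ex2 ey1 ey2
    unfolding deriv_sph_j[OF x10] deriv_sph_j[OF x20] deriv_sph_j[OF y20] deriv_sph_h[OF y10] deriv_sph_h[OF x10] deriv_sph_h[OF x20]
    unfolding sph_h_def sph_j_def
    unfolding exp_Euler[of x1] exp_Euler[of x2] ..
  also have "\<dots> = exp (\<i> * y1) * of_real (v / vr) * of_real \<epsilon>^2 / (x2^2 * y1^2) *
       ((of_real (r 1 / vr) * w)^2 * ((sin x1 - x1 * cos x1) / x1^3) * (sin y2 / y2 * (cos x2 + x2 * sin x2) - of_real \<epsilon>^4 * (of_real (r 2 / vr) * w)^2 * cos x2 * ((sin y2 - y2 * cos y2) / y2^3) / of_real (v / vr)^2)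
        - (cos x1 + x1 * sin x1) * ((of_real (r 2 / vr) * w)^3 * (sin y2 / y2) * ((sin x2 - x2 * cos x2) / x2^3) - of_real \<epsilon>^2 * (of_real (r 2 / vr) * w)^2 * (of_real (r 2 / v) * w) * (sin x2 / x2) * ((sin y2 - y2 * cos y2) / y2^3) / of_real (v / vr)) / (of_real (r 1 / vr) * w)
        - (1 - \<i> * of_real \<epsilon> * (of_real (r 1 / v) * w)) * (sin x1 / x1 * (sin y2 / y2 * (cos x2 + x2 * sin x2) - of_real \<epsilon>^4 * (of_real (r 2 / vr) * w)^2 * cos x2 * ((sin y2 - y2 * cos y2) / y2^3) / of_real (v / vr)^2)
             - of_real \<epsilon>^2 * cos x1 * ((of_real (r 2 / vr) * w)^3 * (sin y2 / y2) * ((sin x2 - x2 * cos x2) / x2^3) - of_real \<epsilon>^2 * (of_real (r 2 / vr) * w)^2 * (of_real (r 2 / v) * w) * (sin x2 / x2) * ((sin y2 - y2 * cos y2) / y2^3) / of_real (v / vr)) / (of_real (r 1 / vr) * w)))"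
  proof (rule id2)
    show "complex_of_real (v / vr) \<noteq> 0" "complex_of_real \<epsilon> \<noteq> 0" "complex_of_real (r 1 / v) * w \<noteq> 0" "complex_of_real (r 2 / v) * w \<noteq> 0"
      using assms by auto
    show "x1 = complex_of_real (v / vr) * y1" "x2 = complex_of_real (v / vr) * y2"
      using assms by (simp_all add: x1_def y1_def x2_def y2_def field_simps)
    show "y1 = complex_of_real \<epsilon> * (complex_of_real (r 1 / v) * w)" "y2 = complex_of_real \<epsilon> * (complex_of_real (r 2 / v) * w)"
      by (simp_all add: y1_def y2_def mult.assoc)
    show "complex_of_real (r 1 / vr) * w = complex_of_real (v / vr) * (complex_of_real (r 1 / v) * w)"
      "complex_of_real (r 2 / vr) * w = complex_of_real (v / vr) * (complex_of_real (r 2 / v) * w)"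
      using assms by (simp_all add: field_simps)
    show "complex_of_real (\<epsilon>^2) = complex_of_real \<epsilon> ^ 2" by simp
  qed
  also have "\<dots> = exp (\<i> * y1) * of_real (v / vr) * of_real \<epsilon>^2 / (x2^2 * y1^2) * G2 (r 1 / vr) (r 2 / vr) (r 1 / v) (r 2 / v) (v / vr) w \<epsilon>"
    unfolding G2_def WYf_def Vf_def pf_def qf_def sincf_def x1_def x2_def y1_def y2_def ..
  finally show ?thesis unfolding x2_def y1_def .
qed


lemma G1_hol: "a1 \<noteq> 0 \<Longrightarrow> \<epsilon> \<noteq> 0 \<Longrightarrow> (\<lambda>w. G1 a1 b1 w \<epsilon>) holomorphic_on (- {0})"
  unfolding G1_def pf_def sincf_def by (auto intro!: holomorphic_intros)

lemma G1_cont: "a1 \<noteq> 0 \<Longrightarrow> w \<noteq> 0 \<Longrightarrow> continuous_on {0<..<e} (\<lambda>\<epsilon>. G1 a1 b1 w \<epsilon>)"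
  unfolding G1_def pf_def sincf_def by (auto intro!: continuous_intros)

lemma G2_hol: "a1 \<noteq> 0 \<Longrightarrow> a2 \<noteq> 0 \<Longrightarrow> b2 \<noteq> 0 \<Longrightarrow> \<tau> \<noteq> 0 \<Longrightarrow> \<epsilon> \<noteq> 0 \<Longrightarrow> (\<lambda>w. G2 a1 a2 b1 b2 \<tau> w \<epsilon>) holomorphic_on (- {0})"
  unfolding G2_def WYf_def Vf_def pf_def sincf_def qf_def by (intro holomorphic_intros) auto

lemma G2_cont: "a1 \<noteq> 0 \<Longrightarrow> a2 \<noteq> 0 \<Longrightarrow> b2 \<noteq> 0 \<Longrightarrow> \<tau> \<noteq> 0 \<Longrightarrow> w \<noteq> 0 \<Longrightarrow> continuous_on {0<..<e} (\<lambda>\<epsilon>. G2 a1 a2 b1 b2 \<tau> w \<epsilon>)"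
  unfolding G2_def WYf_def Vf_def pf_def sincf_def qf_def by (auto intro!: continuous_intros)

theorem mainTheorem3:
  fixes v vr :: real and r :: "nat \<Rightarrow> real"
  assumes "v > 0" and "vr > 0"
  shows
   "(r 1 > 0 \<longrightarrow>
      (\<exists>\<delta>0 > 0. \<exists>\<omega> :: real \<Rightarrow> complex.
         continuous_on {0<..<\<delta>0} \<omega> \<and>
         (\<forall>\<delta> \<in> {0<..<\<delta>0}. Re (\<omega> \<delta>) > 0 \<and> det (transmission_matrix 1 r v vr (\<omega> \<delta>) \<delta>) = 0) \<and>
         (\<lambda>\<delta>. \<omega> \<delta> - (of_real (sqrt 3 * vr / r 1 * \<delta> powr (1/2))
                        - \<i> * of_real (3 * vr / (2 * (v / vr) * r 1) * \<delta>)))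
           \<in> O[at_right 0](\<lambda>\<delta>. of_real (\<delta> powr (3/2)))))
    \<and>
    (r 1 > r 2 \<and> r 2 > 0 \<longrightarrow>
      (\<exists>\<delta>0 > 0. \<exists>\<omega> :: real \<Rightarrow> complex.
         continuous_on {0<..<\<delta>0} \<omega> \<and>
         (\<forall>\<delta> \<in> {0<..<\<delta>0}. Re (\<omega> \<delta>) > 0 \<and> det (transmission_matrix 2 r v vr (\<omega> \<delta>) \<delta>) = 0) \<and>
         (\<lambda>\<delta>. \<omega> \<delta> - (of_real (sqrt (3 * r 1) * vr / sqrt (r 1 ^ 3 - r 2 ^ 3) * \<delta> powr (1/2))
                        - \<i> * of_real (3 * r 1 ^ 2 * vr / (2 * (v / vr) * (r 1 ^ 3 - r 2 ^ 3)) * \<delta>)))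
           \<in> O[at_right 0](\<lambda>\<delta>. of_real (\<delta> powr (3/2)))))"
proof (intro conjI impI)
  have vpos: "0 < v" and vrpos: "0 < vr" using assms by auto
  {
  assume r1: "0 < r 1"
  define a1 where "a1 = r 1 / vr"
  define b1 where "b1 = r 1 / v"
  define \<alpha> where "\<alpha> = a1^2 / 3"
  define c where "c = sqrt 3 * vr / r 1"
  define c2 where "c2 = 3 * vr / (2 * (v / vr) * r 1)"
  define R where "R = c / 2"
  have a1pos: "0 < a1" using r1 vrpos by (simp add: a1_def)
  have apos: "0 < \<alpha>" using a1pos by (simp add: \<alpha>_def)
  have cpos: "0 < c" using r1 vrpos by (simp add: c_def)
  have Rpos: "0 < R" using cpos by (simp add: R_def)
  have ac: "\<alpha> * c^2 = 1"
  proof -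
    have "c^2 = 3 * vr^2 / (r 1)^2" by (simp add: c_def power_divide power_mult_distrib)
    then show ?thesis using r1 vrpos by (simp add: \<alpha>_def a1_def power_divide)
  qed
  have c2eq: "c2 = b1 / (2 * \<alpha>)" using r1 vrpos vpos by (simp add: c2_def b1_def \<alpha>_def a1_def field_simps power2_eq_square)
  have mw: "c / 2 < norm w" if "w \<in> ball (of_real c) R" for w :: complex
  proof -
    have "norm (complex_of_real c - w) < c/2" using that by (simp add: R_def dist_norm)
    moreover have "norm (complex_of_real c) - norm w \<le> norm (complex_of_real c - w)" by (rule norm_triangle_ineq2)
    moreover have "norm (complex_of_real c) = c" using cpos by simp
    ultimately show ?thesis by linarith
  qed
  have nz: "w \<noteq> 0" if "w \<in> ball (of_real c) R" for w :: complex
    using mw[OF that] cpos by auto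
  have ballsub: "ball (complex_of_real c) R \<subseteq> - {0}" using nz by blast
  have S0: "0 \<notin> ball (complex_of_real c) R" using nz by blast
  obtain K e where e: "0 < e"
    and Kb: "\<And>\<epsilon> w. 0 < \<epsilon> \<Longrightarrow> \<epsilon> < e \<Longrightarrow> w \<in> ball (of_real c) R \<Longrightarrow>
       norm (G1 a1 b1 w \<epsilon> - (of_real (a1^2/3) * w^2 + \<i> * of_real \<epsilon> * of_real b1 * w - 1)) \<le> K * \<epsilon>^2"
  proof -
    have "bnd (ball (complex_of_real c) R) (\<lambda>\<epsilon> w. G1 a1 b1 w \<epsilon> - (of_real (a1^2/3) * w^2 + \<i> * of_real \<epsilon> * of_real b1 * w - 1)) 2"
      using bnd_G1[OF bounded_ball S0, of a1 b1] a1pos by simp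
    then show ?thesis using that unfolding bnd_def by blast
  qed
  have "\<exists>\<delta>0 > 0. \<exists>\<omega> :: real \<Rightarrow> complex.
         continuous_on {0<..<\<delta>0} \<omega> \<and>
         (\<forall>\<delta> \<in> {0<..<\<delta>0}. Re (\<omega> \<delta>) > 0 \<and> det (transmission_matrix 1 r v vr (\<omega> \<delta>) \<delta>) = 0) \<and>
         (\<lambda>\<delta>. \<omega> \<delta> - (of_real (c * \<delta> powr (1/2)) - \<i> * of_real (c2 * \<delta>)))
           \<in> O[at_right 0](\<lambda>\<delta>. of_real (\<delta> powr (3/2)))"
  proof (rule assemble[where F = "\<lambda>w \<epsilon>. G1 a1 b1 w \<epsilon>" and D = "\<lambda>\<omega> \<delta>. det (transmission_matrix 1 r v vr \<omega> \<delta>)"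
        and \<alpha> = \<alpha> and \<beta> = b1 and c = c and R = R and ee = e and K = K and cc = c2, OF apos cpos ac Rpos e])
    fix \<epsilon> :: real assume "0 < \<epsilon>" "\<epsilon> < e"
    then show "(\<lambda>w. G1 a1 b1 w \<epsilon>) holomorphic_on ball (of_real c) R"
      using holomorphic_on_subset[OF G1_hol[of a1 \<epsilon> b1] ballsub] a1pos \<open>0 < \<epsilon>\<close> by simp
  next
    fix \<epsilon> :: real and w :: complex assume "0 < \<epsilon>" "\<epsilon> < e" "w \<in> ball (of_real c) R"
    then show "norm (G1 a1 b1 w \<epsilon> - (of_real \<alpha> * w^2 + \<i> * of_real \<epsilon> * of_real b1 * w - 1)) \<le> K * \<epsilon>^2"
      using Kb unfolding \<alpha>_def by blast
  next
    fix w :: complex assume "w \<in> ball (of_real c) R"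
    then have w0: "w \<noteq> 0" by (rule nz)
    show "continuous_on {0<..<e} (\<lambda>\<epsilon>. G1 a1 b1 w \<epsilon>)"
      using G1_cont[of a1 w e b1] a1pos w0 by simp
  next
    fix \<epsilon> :: real and w :: complex assume h: "0 < \<epsilon>" "w \<noteq> 0" "G1 a1 b1 w \<epsilon> = 0"
    show "det (transmission_matrix 1 r v vr (of_real \<epsilon> * w) (\<epsilon>^2)) = 0"
    proof -
      have "det (transmission_matrix 1 r v vr (of_real \<epsilon> * w) (\<epsilon>^2)) =
        - \<i> * of_real \<epsilon>^2 * exp (\<i> * (of_real \<epsilon> * of_real (r 1 / v) * w)) / (of_real \<epsilon> * of_real (r 1 / v) * w)^2 * G1 (r 1 / vr) (r 1 / v) w \<epsilon>"
        by (rule det1_eq[where v=v and vr=vr and r=r and \<epsilon>=\<epsilon> and w=w, OF vpos vrpos r1 h(1,2)])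
      then show ?thesis using h(3) unfolding a1_def b1_def by (simp only: mult_zero_right)
    qed
  qed (rule c2eq)
  then show "\<exists>\<delta>0 > 0. \<exists>\<omega> :: real \<Rightarrow> complex.
         continuous_on {0<..<\<delta>0} \<omega> \<and>
         (\<forall>\<delta> \<in> {0<..<\<delta>0}. Re (\<omega> \<delta>) > 0 \<and> det (transmission_matrix 1 r v vr (\<omega> \<delta>) \<delta>) = 0) \<and>
         (\<lambda>\<delta>. \<omega> \<delta> - (of_real (sqrt 3 * vr / r 1 * \<delta> powr (1/2))
                        - \<i> * of_real (3 * vr / (2 * (v / vr) * r 1) * \<delta>)))
           \<in> O[at_right 0](\<lambda>\<delta>. of_real (\<delta> powr (3/2)))"
    unfolding c_def c2_def .
  }
  {
  assume r12: "r 1 > r 2 \<and> r 2 > 0"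
  then have r1: "0 < r 1" and r2: "0 < r 2" and r12': "r 2 < r 1" by auto
  define a1 where "a1 = r 1 / vr"
  define a2 where "a2 = r 2 / vr"
  define b1 where "b1 = r 1 / v"
  define b2 where "b2 = r 2 / v"
  define \<tau> where "\<tau> = v / vr"
  define \<alpha> where "\<alpha> = (a1^3 - a2^3) / (3 * a1)"
  define c where "c = sqrt (3 * r 1) * vr / sqrt (r 1 ^ 3 - r 2 ^ 3)"
  define c2 where "c2 = 3 * r 1 ^ 2 * vr / (2 * (v / vr) * (r 1 ^ 3 - r 2 ^ 3))"
  define R where "R = c / 2"
  have a1pos: "0 < a1" using r1 vrpos by (simp add: a1_def)
  have a2pos: "0 < a2" using r2 vrpos by (simp add: a2_def)
  have b2pos: "0 < b2" using r2 vpos by (simp add: b2_def)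
  have d3: "0 < r 1 ^ 3 - r 2 ^ 3" using r12' r2 by (simp add: power_strict_mono)
  have a3: "a2^3 < a1^3" using r12' r2 vrpos unfolding a1_def a2_def by (intro power_strict_mono) (auto simp: divide_strict_right_mono)
  have apos: "0 < \<alpha>" using a1pos a3 by (simp add: \<alpha>_def)
  have cpos: "0 < c" using r1 vrpos d3 by (simp add: c_def)
  have Rpos: "0 < R" using cpos by (simp add: R_def)
  have ac: "\<alpha> * c^2 = 1"
  proof -
    define X where "X = r 1 ^ 3 - r 2 ^ 3"
    have X: "0 < X" using d3 by (simp add: X_def)
    have cc: "c^2 = 3 * r 1 * vr^2 / X" using r1 d3 by (simp add: c_def X_def power_divide power_mult_distrib)
    have aa: "\<alpha> = X / vr^3 / (3 * (r 1 / vr))" by (simp add: \<alpha>_def a1_def a2_def X_def power_divide diff_divide_distrib)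
    have aux: "X / vr^3 / (3 * (r 1 / vr)) * (3 * r 1 * vr^2 / X) = 1"
      using X r1 vrpos by (simp add: field_simps power2_eq_square power3_eq_cube)
    show ?thesis unfolding cc aa by (rule aux)
  qed
  have c2eq: "c2 = b1 / (2 * \<alpha>)" using r1 vrpos vpos d3 a3 a1pos
    by (simp add: c2_def b1_def \<alpha>_def a1_def a2_def field_simps power2_eq_square power3_eq_cube)
  have mw: "c / 2 < norm w" if "w \<in> ball (of_real c) R" for w :: complex
  proof -
    have "norm (complex_of_real c - w) < c/2" using that by (simp add: R_def dist_norm)
    moreover have "norm (complex_of_real c) - norm w \<le> norm (complex_of_real c - w)" by (rule norm_triangle_ineq2)
    moreover have "norm (complex_of_real c) = c" using cpos by simp
    ultimately show ?thesis by linarith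
  qed
  have nz: "w \<noteq> 0" if "w \<in> ball (of_real c) R" for w :: complex
    using mw[OF that] cpos by auto
  have ballsub: "ball (complex_of_real c) R \<subseteq> - {0}" using nz by blast
  have mw': "c / 2 \<le> norm w" if "w \<in> ball (of_real c) R" for w :: complex using mw[OF that] by simp
  have S0: "0 \<notin> ball (complex_of_real c) R" using nz by blast
  obtain K e where e: "0 < e"
    and Kb: "\<And>\<epsilon> w. 0 < \<epsilon> \<Longrightarrow> \<epsilon> < e \<Longrightarrow> w \<in> ball (of_real c) R \<Longrightarrow>
       norm (G2 a1 a2 b1 b2 \<tau> w \<epsilon> - (of_real ((a1^3 - a2^3) / (3 * a1)) * w^2 + \<i> * of_real \<epsilon> * of_real b1 * w - 1)) \<le> K * \<epsilon>^2"
  proof -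
    have "bnd (ball (complex_of_real c) R) (\<lambda>\<epsilon> w. G2 a1 a2 b1 b2 \<tau> w \<epsilon> - (of_real ((a1^3 - a2^3) / (3 * a1)) * w^2 + \<i> * of_real \<epsilon> * of_real b1 * w - 1)) 2"
      using bnd_G2[OF bounded_ball S0 mw', of a1 a2 b2 b1 \<tau>] cpos a1pos a2pos b2pos by simp
    then show ?thesis using that unfolding bnd_def by blast
  qed
  have "\<exists>\<delta>0 > 0. \<exists>\<omega> :: real \<Rightarrow> complex.
         continuous_on {0<..<\<delta>0} \<omega> \<and>
         (\<forall>\<delta> \<in> {0<..<\<delta>0}. Re (\<omega> \<delta>) > 0 \<and> det (transmission_matrix 2 r v vr (\<omega> \<delta>) \<delta>) = 0) \<and>
         (\<lambda>\<delta>. \<omega> \<delta> - (of_real (c * \<delta> powr (1/2)) - \<i> * of_real (c2 * \<delta>)))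
           \<in> O[at_right 0](\<lambda>\<delta>. of_real (\<delta> powr (3/2)))"
  proof (rule assemble[where F = "\<lambda>w \<epsilon>. G2 a1 a2 b1 b2 \<tau> w \<epsilon>" and D = "\<lambda>\<omega> \<delta>. det (transmission_matrix 2 r v vr \<omega> \<delta>)"
        and \<alpha> = \<alpha> and \<beta> = b1 and c = c and R = R and ee = e and K = K and cc = c2, OF apos cpos ac Rpos e])
    fix \<epsilon> :: real assume "0 < \<epsilon>" "\<epsilon> < e"
    then show "(\<lambda>w. G2 a1 a2 b1 b2 \<tau> w \<epsilon>) holomorphic_on ball (of_real c) R"
      using holomorphic_on_subset[OF G2_hol[of a1 a2 b2 \<tau> \<epsilon> b1] ballsub] a1pos a2pos b2pos vpos vrpos \<open>0 < \<epsilon>\<close> unfolding \<tau>_def by simp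
  next
    fix \<epsilon> :: real and w :: complex assume "0 < \<epsilon>" "\<epsilon> < e" "w \<in> ball (of_real c) R"
    then show "norm (G2 a1 a2 b1 b2 \<tau> w \<epsilon> - (of_real \<alpha> * w^2 + \<i> * of_real \<epsilon> * of_real b1 * w - 1)) \<le> K * \<epsilon>^2"
      using Kb unfolding \<alpha>_def by blast
  next
    fix w :: complex assume "w \<in> ball (of_real c) R"
    then have w0: "w \<noteq> 0" by (rule nz)
    show "continuous_on {0<..<e} (\<lambda>\<epsilon>. G2 a1 a2 b1 b2 \<tau> w \<epsilon>)"
      using G2_cont[of a1 a2 b2 \<tau> w e b1] a1pos a2pos b2pos vpos vrpos w0 unfolding \<tau>_def by simp
  next
    fix \<epsilon> :: real and w :: complex assume h: "0 < \<epsilon>" "w \<noteq> 0" "G2 a1 a2 b1 b2 \<tau> w \<epsilon> = 0"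
    show "det (transmission_matrix 2 r v vr (of_real \<epsilon> * w) (\<epsilon>^2)) = 0"
    proof -
      have "det (transmission_matrix 2 r v vr (of_real \<epsilon> * w) (\<epsilon>^2)) =
        exp (\<i> * (of_real \<epsilon> * of_real (r 1 / v) * w)) * of_real (v / vr) * of_real \<epsilon>^2
          / ((of_real \<epsilon> * of_real (r 2 / vr) * w)^2 * (of_real \<epsilon> * of_real (r 1 / v) * w)^2)
          * G2 (r 1 / vr) (r 2 / vr) (r 1 / v) (r 2 / v) (v / vr) w \<epsilon>"
        by (rule det2_eq[where v=v and vr=vr and r=r and \<epsilon>=\<epsilon> and w=w, OF vpos vrpos r2 r1 h(1,2)])
      then show ?thesis using h(3) unfolding a1_def a2_def b1_def b2_def \<tau>_def by (simp only: mult_zero_right)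
    qed
  qed (rule c2eq)
  then show "\<exists>\<delta>0 > 0. \<exists>\<omega> :: real \<Rightarrow> complex.
         continuous_on {0<..<\<delta>0} \<omega> \<and>
         (\<forall>\<delta> \<in> {0<..<\<delta>0}. Re (\<omega> \<delta>) > 0 \<and> det (transmission_matrix 2 r v vr (\<omega> \<delta>) \<delta>) = 0) \<and>
         (\<lambda>\<delta>. \<omega> \<delta> - (of_real (sqrt (3 * r 1) * vr / sqrt (r 1 ^ 3 - r 2 ^ 3) * \<delta> powr (1/2))
                        - \<i> * of_real (3 * r 1 ^ 2 * vr / (2 * (v / vr) * (r 1 ^ 3 - r 2 ^ 3)) * \<delta>)))
           \<in> O[at_right 0](\<lambda>\<delta>. of_real (\<delta> powr (3/2)))"
    unfolding c_def c2_def .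
  }
qed

end
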